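(* Let $\{\mu_t\}_{t\ge0}$ be a weakly continuous $\rhd$-convolution semigroup with $\mu_0=\delta_0$, with associated pair $(\gamma,\tau)$. The following are equivalent: (1) there exists $t_0>0$ such that $\operatorname{supp}\mu_{t_0}$ is bounded below; (2) $\operatorname{supp}\mu_t$ is bounded below for all $0\le t<\infty$; (3) $\operatorname{supp}\tau$ is bounded below.
   Context: For a probability measure $\mu$ on $\mathbb{R}$, $G_\mu(z)=\int\frac{1}{z-x}d\mu(x)$ on $\mathbb{C}^+$ and $H_\mu=1/G_\mu$; the monotone convolution $\mu\rhd\nu$ is the unique probability measure with $H_{\mu\rhd\nu}=H_\mu\circ H_\nu$. A weakly continuous $\rhd$-convolution semigroup is a family $\{\mu_t\}_{t\ge0}$ of probability measures, weakly continuous in $t$, with $\mu_s\rhd\mu_t=\mu_{s+t}$. For such a semigroup with $\mu_0=\delta_0$ there is a unique pair $(\gamma,\tau)$, $\gamma\in\mathbb{R}$, $\tau$ positive finite, such that with $A(z)=-\gamma+\int\frac{1+xz}{x-z}d\tau(x)$ the maps $H_t:=H_{\mu_t}$ solve $\frac{d}{dt}H_t(z)=A(H_t(z))$, $H_0(z)=z$, on $\mathbb{C}\setminus\mathbb{R}$ (the associated pair). *)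

theory Defs
  imports "HOL-Probability.Probability"
begin

definition upper_half :: "complex set" where
  "upper_half = {z. Im z > 0}"

definition cauchy_G :: "real measure \<Rightarrow> complex \<Rightarrow> complex" where
  "cauchy_G \<mu> z = (\<integral>x. 1 / (z - complex_of_real x) \<partial>\<mu>)"

definition recip_H :: "real measure \<Rightarrow> complex \<Rightarrow> complex" where
  "recip_H \<mu> z = 1 / cauchy_G \<mu> z"

text \<open>Monotone convolution relation: nu3 = nu1 |> nu2 iff H_nu3 = H_nu1 o H_nu2 on the upper half plane
  (nu3 being a Borel probability measure; such a measure is unique).\<close>
definition is_monotone_conv :: "real measure \<Rightarrow> real measure \<Rightarrow> real measure \<Rightarrow> bool" where
  "is_monotone_conv \<mu> \<nu> \<rho> \<longleftrightarrow>
     prob_space \<rho> \<and> sets \<rho> = sets borel \<and>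
     (\<forall>z\<in>upper_half. recip_H \<rho> z = recip_H \<mu> (recip_H \<nu> z))"

definition weakly_continuous_family :: "(real \<Rightarrow> real measure) \<Rightarrow> bool" where
  "weakly_continuous_family \<mu> \<longleftrightarrow>
     (\<forall>f::real \<Rightarrow> real. continuous_on UNIV f \<longrightarrow> bounded (range f) \<longrightarrow>
        continuous_on {0..} (\<lambda>t. \<integral>x. f x \<partial>\<mu> t))"

definition monotone_conv_semigroup :: "(real \<Rightarrow> real measure) \<Rightarrow> bool" where
  "monotone_conv_semigroup \<mu> \<longleftrightarrow>
     (\<forall>t\<ge>0. prob_space (\<mu> t) \<and> sets (\<mu> t) = sets borel) \<and>
     weakly_continuous_family \<mu> \<and>
     \<mu> 0 = return borel 0 \<and>
     (\<forall>s\<ge>0. \<forall>t\<ge>0. is_monotone_conv (\<mu> s) (\<mu> t) (\<mu> (s + t)))"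

definition gen_A :: "real \<Rightarrow> real measure \<Rightarrow> complex \<Rightarrow> complex" where
  "gen_A \<gamma> \<tau> z = - complex_of_real \<gamma> +
     (\<integral>x. (1 + complex_of_real x * z) / (complex_of_real x - z) \<partial>\<tau>)"

definition associated_pair :: "(real \<Rightarrow> real measure) \<Rightarrow> real \<Rightarrow> real measure \<Rightarrow> bool" where
  "associated_pair \<mu> \<gamma> \<tau> \<longleftrightarrow>
     finite_measure \<tau> \<and> sets \<tau> = sets borel \<and>
     (\<forall>z. Im z \<noteq> 0 \<longrightarrow>
        recip_H (\<mu> 0) z = z \<and>
        (\<forall>t\<ge>0. ((\<lambda>s. recip_H (\<mu> s) z) has_vector_derivative gen_A \<gamma> \<tau> (recip_H (\<mu> t) z))
                  (at t within {0..})))"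

definition msupp :: "real measure \<Rightarrow> real set" where
  "msupp M = {x. \<forall>e>0. emeasure M (ball x e) > 0}"

end

theory Submission
  imports Defs
begin

lemma ball_bound:
  fixes M :: "real measure"
  assumes fm: "finite_measure M" and sM: "sets M = sets borel"
    and hi: "integrable M h" and hn: "\<And>y. 0 \<le> h y"
    and hk: "\<And>y. y \<in> ball x e \<Longrightarrow> k \<le> h y" and k0: "0 \<le> k"
  shows "k * measure M (ball x e) \<le> integral\<^sup>L M h"
proof -
  interpret finite_measure M by fact
  have bs: "ball x e \<in> sets M" using sM by simp
  have "k * measure M (ball x e) = integral\<^sup>L M (\<lambda>y. k * indicator (ball x e) y)"
    using bs by simp
  also have "\<dots> \<le> integral\<^sup>L M h"
  proof (rule integral_mono)
    show "integrable M (\<lambda>y. k * indicator (ball x e) y)"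
      using bs by (intro integrable_mult_right integrable_real_indicator) (simp_all add: emeasure_finite less_top[symmetric])
    show "integrable M h" by fact
    fix y show "k * indicator (ball x e) y \<le> h y"
      using hk[of y] hn[of y] by (cases "y \<in> ball x e") auto
  qed
  finally show ?thesis .
qed


lemma supp_core:
  fixes M :: "real measure"
  assumes fm: "finite_measure M" and sM: "sets M = sets borel"
    and loc: "\<And>x. x < b \<Longrightarrow> \<exists>C e0. 0 < e0 \<and> (\<forall>e. 0 < e \<and> e < e0 \<longrightarrow> measure M (ball x e) \<le> C * e\<^sup>2)"
  shows "\<And>x. x < b \<Longrightarrow> measure M {..x} = 0"
proof -
  interpret finite_measure M by fact
  define F where "F x = measure M {..x}" for x
  have sets[simp]: "{..x} \<in> sets M" "{x<..y} \<in> sets M" "ball x e \<in> sets M" for x y e :: real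
    using sM by auto
  have D: "DERIV F x :> 0" if xb: "x < b" for x
  proof -
    obtain C e0 where e0: "0 < e0" and Cb: "\<And>e. 0 < e \<Longrightarrow> e < e0 \<Longrightarrow> measure M (ball x e) \<le> C * e\<^sup>2"
      using loc[OF xb] by blast
    have key: "\<bar>F (x + h) - F x\<bar> \<le> measure M (ball x (2*\<bar>h\<bar>))" if "h \<noteq> 0" for h
    proof (cases "h > 0")
      case True
      have "F (x + h) - F x = measure M ({..x+h} - {..x})"
        unfolding F_def using True by (subst finite_measure_Diff) auto
      also have "{..x+h} - {..x} = {x<..x+h}" by auto
      also have "measure M {x<..x+h} \<le> measure M (ball x (2*\<bar>h\<bar>))"
        using True by (intro finite_measure_mono) (auto simp: dist_real_def)
      finally have 1: "F (x + h) - F x \<le> measure M (ball x (2*\<bar>h\<bar>))" .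
      have "F x \<le> F (x + h)" unfolding F_def using True by (intro finite_measure_mono) auto
      then show ?thesis using 1 by linarith
    next
      case False
      with that have hn: "h < 0" by simp
      have "F x - F (x + h) = measure M ({..x} - {..x+h})"
        unfolding F_def using hn by (subst finite_measure_Diff) auto
      also have "{..x} - {..x+h} = {x+h<..x}" by auto
      also have "measure M {x+h<..x} \<le> measure M (ball x (2*\<bar>h\<bar>))"
        using hn by (intro finite_measure_mono) (auto simp: dist_real_def)
      finally have 1: "F x - F (x + h) \<le> measure M (ball x (2*\<bar>h\<bar>))" .
      have "F (x + h) \<le> F x" unfolding F_def using hn by (intro finite_measure_mono) auto
      then show ?thesis using 1 by linarith
    qed
    have ev: "eventually (\<lambda>h. norm ((F (x + h) - F x) / h) \<le> 4 * \<bar>C\<bar> * \<bar>h\<bar>) (at 0)"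
    proof -
      have "eventually (\<lambda>h. h \<noteq> 0 \<and> \<bar>h\<bar> < e0/2) (at (0::real))"
        unfolding eventually_at using e0 by (intro exI[of _ "e0/2"]) (auto simp: dist_real_def)
      then show ?thesis
      proof eventually_elim
        case (elim h)
        then have h0: "\<bar>h\<bar> > 0" by simp
        have "\<bar>F (x + h) - F x\<bar> \<le> C * (2*\<bar>h\<bar>)\<^sup>2"
          using key[of h] Cb[of "2*\<bar>h\<bar>"] elim by auto
        also have "\<dots> = 4 * C * \<bar>h\<bar> * \<bar>h\<bar>"
          by (simp add: power2_eq_square)
        also have "\<dots> \<le> 4 * \<bar>C\<bar> * \<bar>h\<bar> * \<bar>h\<bar>"
          by (intro mult_right_mono) auto
        finally have 2: "\<bar>F (x + h) - F x\<bar> \<le> (4 * \<bar>C\<bar> * \<bar>h\<bar>) * \<bar>h\<bar>" .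
        have "norm ((F (x + h) - F x) / h) = \<bar>F (x + h) - F x\<bar> / \<bar>h\<bar>"
          by (simp add: abs_divide)
        also have "\<dots> \<le> 4 * \<bar>C\<bar> * \<bar>h\<bar>"
          using 2 h0 by (simp add: divide_le_eq)
        finally show ?case .
      qed
    qed
    have "((\<lambda>h. 4 * \<bar>C\<bar> * \<bar>h\<bar>) \<longlongrightarrow> 0) (at 0)"
      using tendsto_mult_left_zero[OF tendsto_rabs_zero[OF tendsto_ident_at[of 0 UNIV]], of "4*\<bar>C\<bar>"]
      by (metis (no_types, lifting) ext mult.commute)
    then have "((\<lambda>h. (F (x + h) - F x) / h) \<longlongrightarrow> 0) (at 0)"
      by (intro Lim_null_comparison[OF ev])
    then show ?thesis by (simp add: DERIV_def)
  qed
  fix x assume xb: "x < b"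
  have const: "F y = F x" if "y \<le> x" for y
  proof (cases "y < x")
    case True
    have "continuous_on {y..x} F"
      using D xb by (intro continuous_at_imp_continuous_on ballI DERIV_isCont) (auto intro: D)
    then show ?thesis using DERIV_isconst2[of y x F x] True D xb by auto
  next
    case False then show ?thesis using that by simp
  qed
  have "(\<lambda>n. measure M {..x - real n}) \<longlonglongrightarrow> measure M (\<Inter>n. {..x - real n})"
    by (intro finite_Lim_measure_decseq) (auto simp: decseq_def)
  also have "(\<Inter>n. {..x - real n}) = {}"
  proof -
    have "z \<notin> (\<Inter>n. {..x - real n})" for z
    proof -
      obtain n :: nat where "real n > x - z" using reals_Archimedean2 by blast
      then have "\<not> z \<le> x - real n" by linarith
      then show ?thesis by blast
    qed
    then show ?thesis by blast
  qed
  finally have "(\<lambda>n. F (x - real n)) \<longlonglongrightarrow> 0"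
    unfolding F_def by simp
  moreover have "F (x - real n) = F x" for n by (rule const) simp
  ultimately have "(\<lambda>n. F x) \<longlonglongrightarrow> 0" by simp
  then show "measure M {..x} = 0" unfolding F_def using LIMSEQ_const_iff by blast
qed


lemma meas_borel:
  fixes M :: "real measure"
  assumes "sets M = sets borel" "f \<in> borel_measurable borel"
  shows "f \<in> borel_measurable M"
  using assms measurable_cong_sets[OF assms(1) refl] by simp

lemma pos_int:
  fixes M :: "real measure" and f :: "real \<Rightarrow> real"
  assumes "prob_space M" "integrable M f" "AE y in M. 0 < f y"
  shows "0 < integral\<^sup>L M f"
proof -
  interpret prob_space M by fact
  have nn: "AE y in M. 0 \<le> f y" using assms(3) by eventually_elim auto
  have "0 \<le> integral\<^sup>L M f" using nn by (rule integral_nonneg_AE)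
  moreover have "integral\<^sup>L M f \<noteq> 0"
  proof
    assume "integral\<^sup>L M f = 0"
    then have "AE y in M. f y = 0" using integral_nonneg_eq_0_iff_AE[OF assms(2) nn] by simp
    with assms(3) have "AE y in M. False" by eventually_elim auto
    then show False by (simp add: AE_False)
  qed
  ultimately show ?thesis by simp
qed

lemma cm_f:
  fixes z :: complex and y :: real
  assumes "Im z \<noteq> 0"
  shows "cmod (1 / (z - of_real y)) \<le> 1 / \<bar>Im z\<bar>"
proof -
  have "\<bar>Im z\<bar> = \<bar>Im (z - of_real y)\<bar>" by simp
  also have "\<dots> \<le> cmod (z - of_real y)" by (rule abs_Im_le_cmod)
  finally have "\<bar>Im z\<bar> \<le> cmod (z - of_real y)" .
  then show ?thesis using assms by (simp add: norm_divide frac_le)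
qed

lemma meas_f: fixes z :: complex
  assumes "sets M = sets borel" shows "(\<lambda>y::real. 1 / (z - of_real y)) \<in> borel_measurable M"
proof (rule meas_borel[OF assms])
  have "(\<lambda>y::real. inverse (z - of_real y)) \<in> borel_measurable borel"
    by (rule borel_measurable_inverse[where f="\<lambda>y. z - of_real y"], rule borel_measurable_continuous_onI, intro continuous_intros)
  then show "(\<lambda>y::real. 1 / (z - of_real y)) \<in> borel_measurable borel"
    by (simp add: divide_inverse)
qed

lemma int_f:
  fixes M :: "real measure"
  assumes "finite_measure M" "sets M = sets borel" "Im z \<noteq> 0"
  shows "integrable M (\<lambda>y. 1 / (z - of_real y))"
proof -
  interpret finite_measure M by fact
  show ?thesis
    by (rule integrable_const_bound[where B="1/\<bar>Im z\<bar>"]) (use cm_f[OF assms(3)] meas_f[OF assms(2)] in auto)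
qed

lemma Im_f: "Im (1 / (z - of_real y)) = - (Im z / ((y - Re z)\<^sup>2 + (Im z)\<^sup>2))"
  by (simp add: Im_divide power2_commute)

lemma Re_f: "Re (1 / (z - of_real y)) = (Re z - y) / ((y - Re z)\<^sup>2 + (Im z)\<^sup>2)"
  by (simp add: Re_divide power2_commute)

lemma ImG:
  fixes M :: "real measure"
  assumes "finite_measure M" "sets M = sets borel" "Im z \<noteq> 0"
  shows "Im (cauchy_G M z) = - (\<integral>y. Im z / ((y - Re z)\<^sup>2 + (Im z)\<^sup>2) \<partial>M)"
proof -
  have "Im (cauchy_G M z) = (\<integral>y. Im (1 / (z - of_real y)) \<partial>M)"
    unfolding cauchy_G_def using int_f[OF assms] by simp
  also have "\<dots> = (\<integral>y. - (Im z / ((y - Re z)\<^sup>2 + (Im z)\<^sup>2)) \<partial>M)"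
    by (simp only: Im_f)
  finally show ?thesis by simp
qed

lemma ReG:
  fixes M :: "real measure"
  assumes "finite_measure M" "sets M = sets borel" "Im z \<noteq> 0"
  shows "Re (cauchy_G M z) = (\<integral>y. (Re z - y) / ((y - Re z)\<^sup>2 + (Im z)\<^sup>2) \<partial>M)"
proof -
  have "Re (cauchy_G M z) = (\<integral>y. Re (1 / (z - of_real y)) \<partial>M)"
    unfolding cauchy_G_def using int_f[OF assms] by simp
  also have "\<dots> = (\<integral>y. (Re z - y) / ((y - Re z)\<^sup>2 + (Im z)\<^sup>2) \<partial>M)"
    by (simp only: Re_f)
  finally show ?thesis .
qed

lemma int_ImP:
  fixes M :: "real measure"
  assumes "finite_measure M" "sets M = sets borel" "Im z \<noteq> 0"
  shows "integrable M (\<lambda>y. Im z / ((y - Re z)\<^sup>2 + (Im z)\<^sup>2))"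
proof -
  have "integrable M (\<lambda>y. - Im (1 / (z - of_real y)))" using int_f[OF assms] by auto
  then show ?thesis by (simp only: Im_f minus_minus)
qed

lemma int_ReP:
  fixes M :: "real measure"
  assumes "finite_measure M" "sets M = sets borel" "Im z \<noteq> 0"
  shows "integrable M (\<lambda>y. (Re z - y) / ((y - Re z)\<^sup>2 + (Im z)\<^sup>2))"
proof -
  have "integrable M (\<lambda>y. Re (1 / (z - of_real y)))" using int_f[OF assms] by auto
  then show ?thesis by (simp only: Re_f)
qed


lemma cmod_diff_sq: "(cmod (a - b))\<^sup>2 = (cmod a)\<^sup>2 - 2 * Re (a * cnj b) + (cmod b)\<^sup>2"
  by (simp add: cmod_power2 power2_diff algebra_simps)

lemma var_double:
  fixes M :: "real measure" and f :: "real \<Rightarrow> complex"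
  assumes P: "prob_space M" and fm: "f \<in> borel_measurable M" and fb: "\<And>y. cmod (f y) \<le> B"
  shows "(\<integral>y'. (cmod (f y - f y'))\<^sup>2 \<partial>M) = (cmod (f y))\<^sup>2 - 2 * Re (f y * cnj (integral\<^sup>L M f)) + (\<integral>y'. (cmod (f y'))\<^sup>2 \<partial>M)"
    and "(\<integral>y. (\<integral>y'. (cmod (f y - f y'))\<^sup>2 \<partial>M) \<partial>M) = 2 * ((\<integral>y. (cmod (f y))\<^sup>2 \<partial>M) - (cmod (integral\<^sup>L M f))\<^sup>2)"
proof -
  interpret prob_space M by fact
  have B0: "0 \<le> B" using fb[of 0] norm_ge_zero order_trans by blast
  have intf: "integrable M f"
    by (rule integrable_const_bound[where B=B]) (use fb fm in auto)
  have intsq: "integrable M (\<lambda>y. (cmod (f y))\<^sup>2)"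
  proof (rule integrable_const_bound[where B="B\<^sup>2"])
    show "AE x in M. norm ((cmod (f x))\<^sup>2) \<le> B\<^sup>2"
      using fb by (auto intro!: power_mono)
  qed (use fm in measurable)
  have intRe: "integrable M (\<lambda>y. Re (c * cnj (f y)))" for c
    using intf by (intro integrable_Re integrable_mult_right) auto
  have intReL: "integrable M (\<lambda>y. Re (f y * c))" for c
    using intf by (intro integrable_Re integrable_mult_left) auto
  have inner: "(\<integral>y'. (cmod (a - f y'))\<^sup>2 \<partial>M) = (cmod a)\<^sup>2 - 2 * Re (a * cnj (integral\<^sup>L M f)) + (\<integral>y'. (cmod (f y'))\<^sup>2 \<partial>M)" for a
  proof -
    have "(\<integral>y'. (cmod (a - f y'))\<^sup>2 \<partial>M) = (\<integral>y'. ((cmod a)\<^sup>2 - 2 * Re (a * cnj (f y'))) + (cmod (f y'))\<^sup>2 \<partial>M)"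
      by (simp add: cmod_diff_sq)
    also have "\<dots> = (\<integral>y'. ((cmod a)\<^sup>2 - 2 * Re (a * cnj (f y'))) \<partial>M) + (\<integral>y'. (cmod (f y'))\<^sup>2 \<partial>M)"
    proof (rule Bochner_Integration.integral_add[OF _ intsq])
      show "integrable M (\<lambda>y'. (cmod a)\<^sup>2 - 2 * Re (a * cnj (f y')))"
        by (rule Bochner_Integration.integrable_diff[OF integrable_const integrable_mult_right[OF intRe]])
    qed
    also have "(\<integral>y'. ((cmod a)\<^sup>2 - 2 * Re (a * cnj (f y'))) \<partial>M) = (cmod a)\<^sup>2 - 2 * (\<integral>y'. Re (a * cnj (f y')) \<partial>M)"
      by (simp only: Bochner_Integration.integral_diff[OF integrable_const integrable_mult_right[OF intRe]] integral_mult_right_zero lebesgue_integral_const prob_space) simp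
    also have "(\<integral>y'. Re (a * cnj (f y')) \<partial>M) = Re (a * cnj (integral\<^sup>L M f))"
    proof -
      have "(\<integral>y'. Re (a * cnj (f y')) \<partial>M) = Re (\<integral>y'. a * cnj (f y') \<partial>M)"
        using intf by (intro integral_Re integrable_mult_right) auto
      also have "(\<integral>y'. a * cnj (f y') \<partial>M) = a * cnj (integral\<^sup>L M f)" by simp
      finally show ?thesis .
    qed
    finally show ?thesis .
  qed
  then show "(\<integral>y'. (cmod (f y - f y'))\<^sup>2 \<partial>M) = (cmod (f y))\<^sup>2 - 2 * Re (f y * cnj (integral\<^sup>L M f)) + (\<integral>y'. (cmod (f y'))\<^sup>2 \<partial>M)" .
  have "(\<integral>y. (\<integral>y'. (cmod (f y - f y'))\<^sup>2 \<partial>M) \<partial>M) = (\<integral>y. ((cmod (f y))\<^sup>2 - 2 * Re (f y * cnj (integral\<^sup>L M f))) + (\<integral>y'. (cmod (f y'))\<^sup>2 \<partial>M) \<partial>M)"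
    by (simp only: inner)
  also have "\<dots> = (\<integral>y. ((cmod (f y))\<^sup>2 - 2 * Re (f y * cnj (integral\<^sup>L M f))) \<partial>M) + (\<integral>y'. (cmod (f y'))\<^sup>2 \<partial>M)"
  proof -
    have intG: "integrable M (\<lambda>y. (cmod (f y))\<^sup>2 - 2 * Re (f y * cnj (integral\<^sup>L M f)))"
      by (rule Bochner_Integration.integrable_diff[OF intsq integrable_mult_right[OF intReL]])
    show ?thesis
      by (simp only: Bochner_Integration.integral_add[OF intG integrable_const] lebesgue_integral_const prob_space) simp
  qed
  also have "(\<integral>y. ((cmod (f y))\<^sup>2 - 2 * Re (f y * cnj (integral\<^sup>L M f))) \<partial>M) = (\<integral>y. (cmod (f y))\<^sup>2 \<partial>M) - 2 * (\<integral>y. Re (f y * cnj (integral\<^sup>L M f)) \<partial>M)"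
    by (simp only: Bochner_Integration.integral_diff[OF intsq integrable_mult_right[OF intReL]] integral_mult_right_zero)
  also have "(\<integral>y. Re (f y * cnj (integral\<^sup>L M f)) \<partial>M) = Re (integral\<^sup>L M f * cnj (integral\<^sup>L M f))"
  proof -
    have "(\<integral>y. Re (f y * cnj (integral\<^sup>L M f)) \<partial>M) = Re (\<integral>y. f y * cnj (integral\<^sup>L M f) \<partial>M)"
      using intf by (intro integral_Re integrable_mult_left) auto
    also have "(\<integral>y. f y * cnj (integral\<^sup>L M f) \<partial>M) = integral\<^sup>L M f * cnj (integral\<^sup>L M f)" by simp
    finally show ?thesis .
  qed
  also have "Re (integral\<^sup>L M f * cnj (integral\<^sup>L M f)) = (cmod (integral\<^sup>L M f))\<^sup>2"
    by (simp only: complex_mult_cnj cmod_power2 Re_complex_of_real)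
  finally show "(\<integral>y. (\<integral>y'. (cmod (f y - f y'))\<^sup>2 \<partial>M) \<partial>M) = 2 * ((\<integral>y. (cmod (f y))\<^sup>2 \<partial>M) - (cmod (integral\<^sup>L M f))\<^sup>2)"
    by simp
qed


definition ff :: "complex \<Rightarrow> real \<Rightarrow> complex" where "ff z y = 1 / (z - of_real y)"
definition SS :: "real measure \<Rightarrow> complex \<Rightarrow> real" where "SS M z = (\<integral>y. (cmod (ff z y))\<^sup>2 \<partial>M)"
definition DD :: "real measure \<Rightarrow> complex \<Rightarrow> real" where
  "DD M z = (\<integral>y. (\<integral>y'. (cmod (ff z y - ff z y'))\<^sup>2 \<partial>M) \<partial>M)"

lemma cmod_ff_sq: "(cmod (ff z y))\<^sup>2 = 1 / ((y - Re z)\<^sup>2 + (Im z)\<^sup>2)"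
  by (simp add: ff_def norm_divide cmod_power2 power_divide power2_commute)

lemma ff_bound: "Im z \<noteq> 0 \<Longrightarrow> cmod (ff z y) \<le> 1 / \<bar>Im z\<bar>"
  unfolding ff_def by (rule cm_f)

lemma G_ff: "cauchy_G M z = integral\<^sup>L M (ff z)"
  unfolding cauchy_G_def ff_def ..

context
  fixes M :: "real measure" and z :: complex
  assumes P: "prob_space M" and sM: "sets M = sets borel" and z0: "Im z > 0"
begin

interpretation prob_space M by (rule P)

lemma ffm: "ff z \<in> borel_measurable M"
  unfolding ff_def[abs_def] using meas_f[OF sM] .

lemma ffint: "integrable M (ff z)"
  unfolding ff_def[abs_def] using int_f[OF finite_measure_axioms sM] z0 by auto

lemma int_sq: "integrable M (\<lambda>y. (cmod (ff z y))\<^sup>2)"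
proof (rule integrable_const_bound[where B="(1/\<bar>Im z\<bar>)\<^sup>2"])
  show "AE x in M. norm ((cmod (ff z x))\<^sup>2) \<le> (1 / \<bar>Im z\<bar>)\<^sup>2"
  proof (rule AE_I2)
    fix x
    have "cmod (ff z x) \<le> 1 / \<bar>Im z\<bar>" using ff_bound[of z x] z0 by simp
    then show "norm ((cmod (ff z x))\<^sup>2) \<le> (1 / \<bar>Im z\<bar>)\<^sup>2" by (simp add: power_mono)
  qed
qed (use ffm in measurable)

lemma SS_pos: "0 < SS M z"
  unfolding SS_def
proof (rule pos_int[OF P int_sq])
  show "AE y in M. 0 < (cmod (ff z y))\<^sup>2" unfolding cmod_ff_sq using z0 by (auto intro!: add_nonneg_pos)
qed

lemma ImG_SS: "Im (cauchy_G M z) = - Im z * SS M z"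
proof -
  have "Im (cauchy_G M z) = - (\<integral>y. Im z / ((y - Re z)\<^sup>2 + (Im z)\<^sup>2) \<partial>M)"
    using ImG[OF finite_measure_axioms sM] z0 by simp
  also have "(\<lambda>y. Im z / ((y - Re z)\<^sup>2 + (Im z)\<^sup>2)) = (\<lambda>y. Im z * (cmod (ff z y))\<^sup>2)"
    by (simp add: cmod_ff_sq)
  finally show ?thesis unfolding SS_def by simp
qed

lemma G_ne0: "cauchy_G M z \<noteq> 0"
proof -
  have "0 < Im z * SS M z" using SS_pos z0 by simp
  then have "Im (cauchy_G M z) < 0" using ImG_SS by simp
  then show ?thesis by auto
qed

lemma DD_eq: "DD M z = 2 * (SS M z - (cmod (cauchy_G M z))\<^sup>2)"
  unfolding DD_def SS_def G_ff using var_double(2)[OF P ffm ff_bound] z0 by simp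

lemma DD_inner: "(\<integral>y'. (cmod (ff z y - ff z y'))\<^sup>2 \<partial>M) =
   (cmod (ff z y))\<^sup>2 - 2 * Re (ff z y * cnj (integral\<^sup>L M (ff z))) + SS M z"
  unfolding SS_def using var_double(1)[OF P ffm ff_bound] z0 by simp

lemma int_inner1: "integrable M (\<lambda>y'. (cmod (ff z y - ff z y'))\<^sup>2)"
proof (rule integrable_const_bound[where B="(2/\<bar>Im z\<bar>)\<^sup>2"])
  show "AE x in M. norm ((cmod (ff z y - ff z x))\<^sup>2) \<le> (2 / \<bar>Im z\<bar>)\<^sup>2"
  proof (rule AE_I2)
    fix x
    have "cmod (ff z y - ff z x) \<le> cmod (ff z y) + cmod (ff z x)" by (rule norm_triangle_ineq4)
    also have "\<dots> \<le> 2 / \<bar>Im z\<bar>" using ff_bound[of z y] ff_bound[of z x] z0 by simp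
    finally show "norm ((cmod (ff z y - ff z x))\<^sup>2) \<le> (2 / \<bar>Im z\<bar>)\<^sup>2"
      by (simp add: power_mono)
  qed
qed (use ffm in measurable)

lemma int_inner: "integrable M (\<lambda>y. \<integral>y'. (cmod (ff z y - ff z y'))\<^sup>2 \<partial>M)"
proof -
  have "integrable M (\<lambda>y. (cmod (ff z y))\<^sup>2 - 2 * Re (ff z y * cnj (integral\<^sup>L M (ff z))) + SS M z)"
    by (intro Bochner_Integration.integrable_add Bochner_Integration.integrable_diff int_sq
        integrable_mult_right integrable_Re integrable_mult_left ffint integrable_const)
  then show ?thesis by (simp only: DD_inner)
qed

lemma DD_nonneg: "0 \<le> DD M z"
  unfolding DD_def by (intro integral_nonneg_AE AE_I2 integral_nonneg_AE) auto

lemma G_sq_le: "(cmod (cauchy_G M z))\<^sup>2 \<le> SS M z"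
  using DD_eq DD_nonneg by simp

lemma ImH: "Im (recip_H M z) = Im z * SS M z / (cmod (cauchy_G M z))\<^sup>2"
  unfolding recip_H_def using ImG_SS by (simp add: Im_divide cmod_power2)

lemma ImH_diff: "Im (recip_H M z) - Im z = Im z * (DD M z / 2) / (cmod (cauchy_G M z))\<^sup>2"
proof -
  have g: "(cmod (cauchy_G M z))\<^sup>2 > 0" using G_ne0 by simp
  show ?thesis unfolding ImH DD_eq using g by (simp add: field_simps)
qed

lemma ImH_ge: "Im z \<le> Im (recip_H M z)"
proof -
  have "0 \<le> Im z * (DD M z / 2) / (cmod (cauchy_G M z))\<^sup>2" using DD_nonneg z0 by simp
  then show ?thesis using ImH_diff by linarith
qed

lemma H_ne0: "recip_H M z \<noteq> 0"
  using ImH_ge z0 by auto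

lemma G_inv_H: "cauchy_G M z = 1 / recip_H M z"
  unfolding recip_H_def by simp

end


definition FA :: "complex \<Rightarrow> real \<Rightarrow> complex" where
  "FA w y = (1 + complex_of_real y * w) / (complex_of_real y - w)"

lemma gen_A_FA: "gen_A \<gamma> \<tau> w = - complex_of_real \<gamma> + integral\<^sup>L \<tau> (FA w)"
  unfolding gen_A_def FA_def ..

lemma Im_FA: "Im (FA w y) = Im w * (1 + y\<^sup>2) / ((y - Re w)\<^sup>2 + (Im w)\<^sup>2)"
  unfolding FA_def by (simp add: Im_divide power2_eq_square algebra_simps)

lemma Re_FA: "Im w \<noteq> 0 \<Longrightarrow> Re (FA w y) = - y + (1 + y\<^sup>2) * (y - Re w) / ((y - Re w)\<^sup>2 + (Im w)\<^sup>2)"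
proof -
  assume v: "Im w \<noteq> 0"
  have d: "(y - Re w)\<^sup>2 + (Im w)\<^sup>2 > 0" using v by (simp add: add_nonneg_pos)
  have 1: "Re (FA w y) = ((1 + y * Re w) * (y - Re w) - y * (Im w)\<^sup>2) / ((y - Re w)\<^sup>2 + (Im w)\<^sup>2)"
    unfolding FA_def by (simp add: Re_divide power2_eq_square algebra_simps)
  have 2: "((1 + y * Re w) * (y - Re w) - y * (Im w)\<^sup>2) = - y * ((y - Re w)\<^sup>2 + (Im w)\<^sup>2) + (1 + y\<^sup>2) * (y - Re w)"
    by (simp add: power2_eq_square algebra_simps)
  show ?thesis unfolding 1 2 using d v by (simp add: add_divide_distrib diff_divide_distrib)
qed

lemma FA_alt: "Im w \<noteq> 0 \<Longrightarrow> FA w y = w + (1 + w\<^sup>2) / (complex_of_real y - w)"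
proof -
  assume v: "Im w \<noteq> 0"
  have "complex_of_real y - w \<noteq> 0" using v by (auto simp: complex_eq_iff)
  then show ?thesis unfolding FA_def by (simp add: field_simps power2_eq_square)
qed

lemma FA_bound: "Im w \<noteq> 0 \<Longrightarrow> cmod (FA w y) \<le> cmod w + cmod (1 + w\<^sup>2) / \<bar>Im w\<bar>"
proof -
  assume v: "Im w \<noteq> 0"
  have "\<bar>Im w\<bar> = \<bar>Im (complex_of_real y - w)\<bar>" by simp
  also have "\<dots> \<le> cmod (complex_of_real y - w)" by (rule abs_Im_le_cmod)
  finally have l: "\<bar>Im w\<bar> \<le> cmod (complex_of_real y - w)" .
  have "cmod (FA w y) \<le> cmod w + cmod ((1 + w\<^sup>2) / (complex_of_real y - w))"
    unfolding FA_alt[OF v] by (rule norm_triangle_ineq)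
  also have "cmod ((1 + w\<^sup>2) / (complex_of_real y - w)) \<le> cmod (1 + w\<^sup>2) / \<bar>Im w\<bar>"
  proof -
    have p: "0 < \<bar>Im w\<bar>" using v by simp
    then have "0 < cmod (complex_of_real y - w) * \<bar>Im w\<bar>" using l by (intro mult_pos_pos) auto
    then show ?thesis unfolding norm_divide using l by (intro divide_left_mono) auto
  qed
  finally show ?thesis by simp
qed

lemma FA_meas: "sets M = sets borel \<Longrightarrow> FA w \<in> borel_measurable M"
  unfolding FA_def[abs_def]
  by (rule meas_borel) (assumption, measurable)

lemma FA_int:
  assumes "finite_measure M" "sets M = sets borel" "Im w \<noteq> 0"
  shows "integrable M (FA w)"
proof -
  interpret finite_measure M by fact
  show ?thesis
    by (rule integrable_const_bound[where B="cmod w + cmod (1 + w\<^sup>2) / \<bar>Im w\<bar>"])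
      (use FA_bound[OF assms(3)] FA_meas[OF assms(2)] in auto)
qed

lemma Im_A:
  assumes "finite_measure M" "sets M = sets borel" "Im w \<noteq> 0"
  shows "Im (gen_A \<gamma> M w) = (\<integral>y. Im (FA w y) \<partial>M)"
  unfolding gen_A_FA using FA_int[OF assms] by simp

lemma Re_A:
  assumes "finite_measure M" "sets M = sets borel" "Im w \<noteq> 0"
  shows "Re (gen_A \<gamma> M w) = - \<gamma> + (\<integral>y. Re (FA w y) \<partial>M)"
  unfolding gen_A_FA using FA_int[OF assms] by simp

lemma ratio_bound:
  fixes a c y :: real
  assumes "c \<le> -1" "c \<le> a - 1" "a < y"
  shows "1 + y\<^sup>2 \<le> (2 + a\<^sup>2) * (y - c)\<^sup>2"
proof (cases "y \<ge> 0")
  case True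
  have "y \<le> y - c" "1 \<le> y - c" using assms True by auto
  then have "y\<^sup>2 \<le> (y - c)\<^sup>2" "1 \<le> (y - c)\<^sup>2" using True by (auto intro: power_mono one_le_power)
  moreover have "0 \<le> a\<^sup>2 * (y - c)\<^sup>2" by simp
  moreover have "(2 + a\<^sup>2) * (y - c)\<^sup>2 = 2 * (y - c)\<^sup>2 + a\<^sup>2 * (y - c)\<^sup>2" by (simp add: distrib_right)
  ultimately show ?thesis by linarith
next
  case False
  have "\<bar>y\<bar> \<le> \<bar>a\<bar>" using assms False by linarith
  then have "y\<^sup>2 \<le> a\<^sup>2" by (simp add: abs_le_square_iff)
  moreover have "1 \<le> (y - c)\<^sup>2" using assms by (intro one_le_power) auto
  ultimately have "1 + y\<^sup>2 \<le> (2 + a\<^sup>2) * 1" by simp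
  also have "\<dots> \<le> (2 + a\<^sup>2) * (y - c)\<^sup>2" using \<open>1 \<le> (y - c)\<^sup>2\<close> by (intro mult_left_mono) auto
  finally show ?thesis .
qed


lemma Im_FA_bound:
  fixes a c y :: real
  assumes "c \<le> -1" "c \<le> a - 1" "a < y" "Re w \<le> c" "Im w > 0"
  shows "Im (FA w y) \<le> Im w * (2 + a\<^sup>2)"
proof -
  define d where "d = y - Re w"
  have dc: "y - c \<le> d" "1 \<le> y - c" using assms unfolding d_def by auto
  have d1: "1 \<le> d" using dc by simp
  have "(y - c)\<^sup>2 \<le> d\<^sup>2" using dc by (intro power_mono) auto
  have "(1 + y\<^sup>2) / (d\<^sup>2 + (Im w)\<^sup>2) \<le> (1 + y\<^sup>2) / d\<^sup>2"
  proof -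
    have dp: "0 < d\<^sup>2" "0 < d\<^sup>2 + (Im w)\<^sup>2" using d1 by (auto intro: add_pos_nonneg)
    then show ?thesis using d1 by (intro divide_left_mono) (auto intro: mult_pos_pos)
  qed
  also have "\<dots> \<le> (2 + a\<^sup>2) * (y - c)\<^sup>2 / d\<^sup>2"
    using ratio_bound[OF assms(1-3)] d1 by (intro divide_right_mono) auto
  also have "\<dots> \<le> (2 + a\<^sup>2)"
    using \<open>(y - c)\<^sup>2 \<le> d\<^sup>2\<close> d1 by (simp add: divide_le_eq mult_left_mono)
  finally have "(1 + y\<^sup>2) / (d\<^sup>2 + (Im w)\<^sup>2) \<le> 2 + a\<^sup>2" .
  then have "Im w * ((1 + y\<^sup>2) / (d\<^sup>2 + (Im w)\<^sup>2)) \<le> Im w * (2 + a\<^sup>2)"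
    using assms(5) by (intro mult_left_mono) auto
  then show ?thesis unfolding Im_FA d_def by simp
qed

lemma Re_FA_bound:
  fixes a c y :: real
  assumes "c \<le> -1" "c \<le> a - 1" "a < y" "Re w \<le> c" "Im w \<noteq> 0"
  shows "Re (FA w y) \<le> 1 + \<bar>c\<bar> * \<bar>a\<bar>"
proof -
  define d where "d = y - Re w"
  have dc: "y - c \<le> d" "1 \<le> y - c" using assms unfolding d_def by auto
  have d1: "1 \<le> d" using dc by simp
  have "(1 + y\<^sup>2) * d / (d\<^sup>2 + (Im w)\<^sup>2) \<le> (1 + y\<^sup>2) * d / d\<^sup>2"
  proof -
    have dp: "0 < d\<^sup>2" "0 < d\<^sup>2 + (Im w)\<^sup>2" using d1 by (auto intro: add_pos_nonneg)
    then show ?thesis using d1 by (intro divide_left_mono) (auto intro: mult_pos_pos)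
  qed
  also have "\<dots> = (1 + y\<^sup>2) / d" using d1 by (simp add: power2_eq_square)
  also have "\<dots> \<le> (1 + y\<^sup>2) / (y - c)" using dc by (intro divide_left_mono) auto
  finally have 1: "(1 + y\<^sup>2) * d / (d\<^sup>2 + (Im w)\<^sup>2) \<le> (1 + y\<^sup>2) / (y - c)" .
  have 2: "- y + (1 + y\<^sup>2) / (y - c) \<le> 1 + \<bar>c\<bar> * \<bar>a\<bar>"
  proof -
    have pos: "0 < y - c" using dc by simp
    have "1 + c * y \<le> (1 + \<bar>c\<bar> * \<bar>a\<bar>) * (y - c)"
    proof (cases "y \<ge> 0")
      case True
      have "c * y \<le> 0" using True assms by (simp add: mult_nonpos_nonneg)
      moreover have "1 \<le> (1 + \<bar>c\<bar> * \<bar>a\<bar>) * (y - c)"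
        using mult_mono[of 1 "1 + \<bar>c\<bar> * \<bar>a\<bar>" 1 "y - c"] dc by simp
      ultimately show ?thesis by linarith
    next
      case False
      have "\<bar>y\<bar> \<le> \<bar>a\<bar>" using assms False by linarith
      then have "c * y \<le> \<bar>c\<bar> * \<bar>a\<bar>"
      proof -
        have "c * y \<le> \<bar>c\<bar> * \<bar>y\<bar>" by (simp add: abs_mult[symmetric])
        also have "\<dots> \<le> \<bar>c\<bar> * \<bar>a\<bar>" using \<open>\<bar>y\<bar> \<le> \<bar>a\<bar>\<close> by (intro mult_left_mono) auto
        finally show ?thesis .
      qed
      moreover have "1 + \<bar>c\<bar> * \<bar>a\<bar> \<le> (1 + \<bar>c\<bar> * \<bar>a\<bar>) * (y - c)"
        using mult_left_mono[of 1 "y - c" "1 + \<bar>c\<bar> * \<bar>a\<bar>"] dc by simp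
      ultimately show ?thesis by linarith
    qed
    moreover have "- y + (1 + y\<^sup>2) / (y - c) = (1 + c * y) / (y - c)"
      using pos by (simp add: field_simps power2_eq_square)
    ultimately show ?thesis using pos by (simp add: divide_le_eq)
  qed
  show ?thesis unfolding Re_FA[OF assms(5)] d_def[symmetric] using 1 2 by linarith
qed

lemma hlp:
  fixes e q :: real
  assumes "q < e\<^sup>2" "0 < e" and q0: "0 \<le> q"
  shows "1 / (2 * e) \<le> e / (q + e\<^sup>2)"
proof -
  have "e / (2 * e\<^sup>2) \<le> e / (q + e\<^sup>2)"
    using assms by (intro divide_left_mono) (auto intro!: mult_pos_pos add_nonneg_pos)
  moreover have "e / (2 * e\<^sup>2) = 1 / (2 * e)" using assms by (simp add: power2_eq_square)
  ultimately show ?thesis by simp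
qed

lemma ball_G:
  fixes M :: "real measure"
  assumes P: "prob_space M" and sM: "sets M = sets borel" and e: "0 < e"
  shows "measure M (ball x e) \<le> 2 * e * (- Im (cauchy_G M (Complex x e)))"
proof -
  interpret prob_space M by fact
  have "- Im (cauchy_G M (Complex x e)) = (\<integral>y. e / ((y - x)\<^sup>2 + e\<^sup>2) \<partial>M)"
    using ImG[OF finite_measure_axioms sM, of "Complex x e"] e by simp
  moreover have "(1 / (2 * e)) * measure M (ball x e) \<le> (\<integral>y. e / ((y - x)\<^sup>2 + e\<^sup>2) \<partial>M)"
  proof (rule ball_bound[OF finite_measure_axioms sM])
    show "integrable M (\<lambda>y. e / ((y - x)\<^sup>2 + e\<^sup>2))"
      using int_ImP[OF finite_measure_axioms sM, of "Complex x e"] e by simp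
    fix y show "0 \<le> e / ((y - x)\<^sup>2 + e\<^sup>2)" using e by simp
    assume "y \<in> ball x e"
    then have a: "\<bar>y - x\<bar> < e" by (simp add: dist_real_def abs_minus_commute)
    have "(y - x)\<^sup>2 = \<bar>y - x\<bar>\<^sup>2" by simp
    also have "\<dots> < e\<^sup>2" using a by (intro power_strict_mono) auto
    finally have "(y - x)\<^sup>2 < e\<^sup>2" .
    then show "1 / (2 * e) \<le> e / ((y - x)\<^sup>2 + e\<^sup>2)"
      using e by (intro hlp) auto
  qed (use e in simp)
  ultimately show ?thesis using e by (simp add: field_simps)
qed

lemma ball_A:
  fixes M :: "real measure"
  assumes P: "finite_measure M" and sM: "sets M = sets borel" and e: "0 < e"
  shows "measure M (ball x e) \<le> 2 * e * Im (gen_A \<gamma> M (Complex x e))"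
proof -
  interpret finite_measure M by fact
  have "Im (gen_A \<gamma> M (Complex x e)) = (\<integral>y. Im (FA (Complex x e) y) \<partial>M)"
    using Im_A[OF P sM, of "Complex x e"] e by simp
  moreover have "(1 / (2 * e)) * measure M (ball x e) \<le> (\<integral>y. Im (FA (Complex x e) y) \<partial>M)"
  proof (rule ball_bound[OF P sM])
    show "integrable M (\<lambda>y. Im (FA (Complex x e) y))"
      using FA_int[OF P sM, of "Complex x e"] e by simp
    fix y show "0 \<le> Im (FA (Complex x e) y)" unfolding Im_FA using e by simp
    assume "y \<in> ball x e"
    then have a: "\<bar>y - x\<bar> < e" by (simp add: dist_real_def abs_minus_commute)
    have "(y - x)\<^sup>2 = \<bar>y - x\<bar>\<^sup>2" by simp
    also have "\<dots> < e\<^sup>2" using a by (intro power_strict_mono) auto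
    finally have l: "(y - x)\<^sup>2 < e\<^sup>2" .
    have "1 / (2 * e) \<le> e * 1 / ((y - x)\<^sup>2 + e\<^sup>2)"
      using hlp[OF l e] by simp
    also have "\<dots> \<le> e * (1 + y\<^sup>2) / ((y - x)\<^sup>2 + e\<^sup>2)"
      using e by (intro divide_right_mono mult_left_mono) auto
    finally show "1 / (2 * e) \<le> Im (FA (Complex x e) y)" unfolding Im_FA by simp
  qed (use e in simp)
  ultimately show ?thesis using e by (simp add: field_simps)
qed


lemma bdd_of_null:
  fixes M :: "real measure"
  assumes fm: "finite_measure M" and sM: "sets M = sets borel"
    and n: "\<And>x. x < b \<Longrightarrow> measure M {..x} = 0"
  shows "bdd_below (msupp M)"
proof (rule bdd_belowI[of _ b])
  interpret finite_measure M by fact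
  fix x assume x: "x \<in> msupp M"
  show "b \<le> x"
  proof (rule ccontr)
    assume "\<not> b \<le> x"
    then have xb: "x < b" by simp
    define e where "e = (b - x) / 2"
    have e: "0 < e" using xb by (simp add: e_def)
    have "ball x e \<subseteq> {..x + e}" by (auto simp: dist_real_def)
    then have "emeasure M (ball x e) \<le> emeasure M {..x + e}"
      using sM by (intro emeasure_mono) auto
    also have "emeasure M {..x + e} = 0"
    proof -
      have "x + e < b" unfolding e_def using xb by (simp add: field_simps)
      then have "measure M {..x + e} = 0" by (rule n)
      then show ?thesis using sM by (simp add: emeasure_eq_measure)
    qed
    finally have "emeasure M (ball x e) = 0" by simp
    with x e show False unfolding msupp_def by auto
  qed
qed

lemma null_of_bdd:
  fixes M :: "real measure"
  assumes fm: "finite_measure M" and sM: "sets M = sets borel"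
    and bd: "bdd_below (msupp M)"
  shows "\<exists>b. \<forall>x<b. measure M {..x} = 0"
proof -
  interpret finite_measure M by fact
  obtain m where m: "\<And>x. x \<in> msupp M \<Longrightarrow> m \<le> x" using bd unfolding bdd_below_def by auto
  have "measure M {..x} = 0" if "x < m" for x
  proof (rule supp_core[OF fm sM, of m])
    fix y assume y: "y < m"
    then have "y \<notin> msupp M" using m by force
    then obtain e where e: "0 < e" "emeasure M (ball y e) = 0" unfolding msupp_def by (auto simp: not_less)
    have "\<forall>e'. 0 < e' \<and> e' < e \<longrightarrow> measure M (ball y e') \<le> 0 * e'\<^sup>2"
    proof (intro allI impI)
      fix e' assume e': "0 < e' \<and> e' < e"
      have "emeasure M (ball y e') \<le> emeasure M (ball y e)"
        using e' sM by (intro emeasure_mono) auto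
      then have "emeasure M (ball y e') = 0" using e by simp
      then show "measure M (ball y e') \<le> 0 * e'\<^sup>2" by (simp add: measure_def)
    qed
    then show "\<exists>C e0. 0 < e0 \<and> (\<forall>e. 0 < e \<and> e < e0 \<longrightarrow> measure M (ball y e) \<le> C * e\<^sup>2)"
      using e(1) by blast
  qed (rule that)
  then show ?thesis by blast
qed

lemma supp_crit:
  fixes M :: "real measure"
  assumes fm: "finite_measure M" and sM: "sets M = sets borel"
    and loc: "\<And>x. x < b \<Longrightarrow> \<exists>C e0. 0 < e0 \<and> (\<forall>e. 0 < e \<and> e < e0 \<longrightarrow> measure M (ball x e) \<le> C * e\<^sup>2)"
  shows "bdd_below (msupp M)"
proof (rule bdd_of_null[OF fm sM])
  fix x assume "x < b"
  show "measure M {..x} = 0" by (rule supp_core[OF fm sM]) (fact loc, fact)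
qed


lemma ae_gt:
  fixes M :: "real measure"
  assumes "finite_measure M" "sets M = sets borel" "measure M {..a} = 0"
  shows "AE y in M. a < y"
proof -
  interpret finite_measure M by fact
  have n: "{..a} \<in> null_sets M" using assms(2,3) by (simp add: null_sets_def emeasure_eq_measure)
  show ?thesis by (rule AE_I'[OF n]) auto
qed

lemma ff_diff: "Im z \<noteq> 0 \<Longrightarrow> ff z y - ff z y' = of_real (y - y') * ff z y * ff z y'"
proof -
  assume z: "Im z \<noteq> 0"
  have a: "z - of_real y \<noteq> 0" "z - of_real y' \<noteq> 0" using z by (auto simp: complex_eq_iff)
  show ?thesis unfolding ff_def using a by (simp add: field_simps)
qed

lemma cmod_ofr: "cmod (complex_of_real y - complex_of_real y') = \<bar>y - y'\<bar>"
  by (metis norm_of_real of_real_diff)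

lemma ff_sq_compare:
  fixes x e a y :: real
  assumes "x \<le> -1" "x \<le> a - 1" "a < y" "0 < e"
  shows "(cmod (ff (Complex x e) y))\<^sup>2 \<le> (2 + a\<^sup>2) * (cmod (ff \<i> y))\<^sup>2"
proof -
  have r: "1 + y\<^sup>2 \<le> (2 + a\<^sup>2) * (y - x)\<^sup>2" by (rule ratio_bound) (use assms in auto)
  have p: "0 < (y - x)\<^sup>2" using assms by simp
  have "(cmod (ff (Complex x e) y))\<^sup>2 = 1 / ((y - x)\<^sup>2 + e\<^sup>2)" by (simp add: cmod_ff_sq)
  also have "\<dots> \<le> 1 / (y - x)\<^sup>2" using p by (intro divide_left_mono) (auto intro!: mult_pos_pos add_pos_nonneg)
  also have "\<dots> = (1 + y\<^sup>2) / ((1 + y\<^sup>2) * (y - x)\<^sup>2)"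
  proof -
    have "1 + y\<^sup>2 \<noteq> 0" by (metis add_pos_nonneg zero_le_power2 zero_less_one less_irrefl)
    then show ?thesis by simp
  qed
  also have "\<dots> \<le> ((2 + a\<^sup>2) * (y - x)\<^sup>2) / ((1 + y\<^sup>2) * (y - x)\<^sup>2)"
    by (rule divide_right_mono[OF r]) simp
  also have "\<dots> = (2 + a\<^sup>2) / (1 + y\<^sup>2)" using p by simp
  also have "\<dots> = (2 + a\<^sup>2) * (cmod (ff \<i> y))\<^sup>2" by (simp add: cmod_ff_sq)
  finally show ?thesis .
qed

lemma ff_diff_compare:
  fixes x e a y y' :: real
  assumes "x \<le> -1" "x \<le> a - 1" "a < y" "a < y'" "0 < e"
  shows "(cmod (ff (Complex x e) y - ff (Complex x e) y'))\<^sup>2 \<le> (2 + a\<^sup>2)\<^sup>2 * (cmod (ff \<i> y - ff \<i> y'))\<^sup>2"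
proof -
  let ?z = "Complex x e"
  have e1: "(cmod (ff ?z y - ff ?z y'))\<^sup>2 = (y - y')\<^sup>2 * ((cmod (ff ?z y))\<^sup>2 * (cmod (ff ?z y'))\<^sup>2)"
    using assms by (simp add: ff_diff norm_mult power_mult_distrib cmod_ofr)
  have e2: "(cmod (ff \<i> y - ff \<i> y'))\<^sup>2 = (y - y')\<^sup>2 * ((cmod (ff \<i> y))\<^sup>2 * (cmod (ff \<i> y'))\<^sup>2)"
    by (simp add: ff_diff norm_mult power_mult_distrib cmod_ofr)
  have "(cmod (ff ?z y))\<^sup>2 * (cmod (ff ?z y'))\<^sup>2 \<le> ((2 + a\<^sup>2) * (cmod (ff \<i> y))\<^sup>2) * ((2 + a\<^sup>2) * (cmod (ff \<i> y'))\<^sup>2)"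
    using ff_sq_compare[OF assms(1,2,3,5)] ff_sq_compare[OF assms(1,2,4,5)] by (intro mult_mono) auto
  also have "\<dots> = (2 + a\<^sup>2)\<^sup>2 * ((cmod (ff \<i> y))\<^sup>2 * (cmod (ff \<i> y'))\<^sup>2)" by (simp add: power2_eq_square algebra_simps)
  finally have "(y - y')\<^sup>2 * ((cmod (ff ?z y))\<^sup>2 * (cmod (ff ?z y'))\<^sup>2) \<le> (y - y')\<^sup>2 * ((2 + a\<^sup>2)\<^sup>2 * ((cmod (ff \<i> y))\<^sup>2 * (cmod (ff \<i> y'))\<^sup>2))"
    by (intro mult_left_mono) auto
  then show ?thesis unfolding e1 e2 by (simp add: algebra_simps)
qed

lemma DD_compare:
  fixes M :: "real measure"
  assumes P: "prob_space M" and sM: "sets M = sets borel" and ae: "AE y in M. a < y"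
    and x: "x \<le> -1" "x \<le> a - 1" and e: "0 < e"
  shows "DD M (Complex x e) \<le> (2 + a\<^sup>2)\<^sup>2 * DD M \<i>"
proof -
  let ?z = "Complex x e"
  have z0: "Im ?z > 0" using e by simp
  have i0: "Im \<i> > 0" by simp
  have "DD M ?z \<le> (\<integral>y. (2 + a\<^sup>2)\<^sup>2 * (\<integral>y'. (cmod (ff \<i> y - ff \<i> y'))\<^sup>2 \<partial>M) \<partial>M)"
    unfolding DD_def
  proof (rule integral_mono_AE)
    show "integrable M (\<lambda>y. \<integral>y'. (cmod (ff ?z y - ff ?z y'))\<^sup>2 \<partial>M)" by (rule int_inner[OF P sM z0])
    show "integrable M (\<lambda>y. (2 + a\<^sup>2)\<^sup>2 * (\<integral>y'. (cmod (ff \<i> y - ff \<i> y'))\<^sup>2 \<partial>M))"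
      by (intro integrable_mult_right int_inner[OF P sM i0])
    show "AE y in M. (\<integral>y'. (cmod (ff ?z y - ff ?z y'))\<^sup>2 \<partial>M) \<le> (2 + a\<^sup>2)\<^sup>2 * (\<integral>y'. (cmod (ff \<i> y - ff \<i> y'))\<^sup>2 \<partial>M)"
      using ae
    proof eventually_elim
      case (elim y)
      have "(\<integral>y'. (cmod (ff ?z y - ff ?z y'))\<^sup>2 \<partial>M) \<le> (\<integral>y'. (2 + a\<^sup>2)\<^sup>2 * (cmod (ff \<i> y - ff \<i> y'))\<^sup>2 \<partial>M)"
      proof (rule integral_mono_AE)
        show "integrable M (\<lambda>y'. (cmod (ff ?z y - ff ?z y'))\<^sup>2)" by (rule int_inner1[OF P sM z0])
        show "integrable M (\<lambda>y'. (2 + a\<^sup>2)\<^sup>2 * (cmod (ff \<i> y - ff \<i> y'))\<^sup>2)"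
          by (intro integrable_mult_right int_inner1[OF P sM i0])
        show "AE y' in M. (cmod (ff ?z y - ff ?z y'))\<^sup>2 \<le> (2 + a\<^sup>2)\<^sup>2 * (cmod (ff \<i> y - ff \<i> y'))\<^sup>2"
          using ae by eventually_elim (rule ff_diff_compare, use x e elim in auto)
      qed
      then show ?case by simp
    qed
  qed
  then show ?thesis unfolding DD_def by simp
qed


lemma nonincr:
  fixes f :: "real \<Rightarrow> real"
  assumes ab: "a \<le> b" and c: "continuous_on {a..b} f"
    and d: "\<And>x. a < x \<Longrightarrow> x < b \<Longrightarrow> \<exists>d. (f has_real_derivative d) (at x) \<and> d \<le> 0"
  shows "f b \<le> f a"
proof (cases "a < b")
  case True
  have dif: "f differentiable (at x)" if "a < x" "x < b" for x
    using d[OF that] real_differentiable_def by blast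
  obtain l z where lz: "a < z" "z < b" "DERIV f z :> l" "f b - f a = (b - a) * l"
    using MVT[OF True c dif] by blast
  obtain d' where d': "(f has_real_derivative d') (at z)" "d' \<le> 0" using d[OF lz(1,2)] by blast
  have "l = d'" using DERIV_unique[OF lz(3) d'(1)] .
  then have "(b - a) * l \<le> 0" using d'(2) True by (simp add: mult_nonneg_nonpos)
  then show ?thesis using lz(4) by simp
next
  case False then show ?thesis using ab by simp
qed

locale msg =
  fixes \<mu> :: "real \<Rightarrow> real measure" and \<gamma> :: real and \<tau> :: "real measure"
  assumes sg: "monotone_conv_semigroup \<mu>" and ap: "associated_pair \<mu> \<gamma> \<tau>"
begin

lemma P: "0 \<le> t \<Longrightarrow> prob_space (\<mu> t)"
  using sg unfolding monotone_conv_semigroup_def by simp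

lemma sM: "0 \<le> t \<Longrightarrow> sets (\<mu> t) = sets borel"
  using sg unfolding monotone_conv_semigroup_def by simp

lemma tf: "finite_measure \<tau>" and ts: "sets \<tau> = sets borel"
  using ap unfolding associated_pair_def by simp_all

lemma H0: "Im z \<noteq> 0 \<Longrightarrow> recip_H (\<mu> 0) z = z"
  using ap unfolding associated_pair_def by simp

lemma dH: "Im z \<noteq> 0 \<Longrightarrow> 0 \<le> t \<Longrightarrow>
  ((\<lambda>s. recip_H (\<mu> s) z) has_vector_derivative gen_A \<gamma> \<tau> (recip_H (\<mu> t) z)) (at t within {0..})"
  using ap unfolding associated_pair_def by simp

lemma dH_at: "Im z \<noteq> 0 \<Longrightarrow> 0 < t \<Longrightarrow>
  ((\<lambda>s. recip_H (\<mu> s) z) has_vector_derivative gen_A \<gamma> \<tau> (recip_H (\<mu> t) z)) (at t)"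
proof -
  assume "Im z \<noteq> 0" "0 < t"
  moreover have "t \<in> interior {0..}" using \<open>0 < t\<close> by (simp add: interior_Ici[of "-1"])
  ultimately show ?thesis using dH[of z t] at_within_interior[of t "{0..}"] by simp
qed

lemma dRe_at: assumes "Im z \<noteq> 0" "0 < t" shows
  "((\<lambda>s. Re (recip_H (\<mu> s) z)) has_real_derivative Re (gen_A \<gamma> \<tau> (recip_H (\<mu> t) z))) (at t)"
  using dH_at[OF assms] unfolding has_vector_derivative_complex_iff by (rule conjunct1)

lemma dIm_at: assumes "Im z \<noteq> 0" "0 < t" shows
  "((\<lambda>s. Im (recip_H (\<mu> s) z)) has_real_derivative Im (gen_A \<gamma> \<tau> (recip_H (\<mu> t) z))) (at t)"
  using dH_at[OF assms] unfolding has_vector_derivative_complex_iff by (rule conjunct2)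

lemma dIm_0: "Im z \<noteq> 0 \<Longrightarrow>
  ((\<lambda>s. (Im (recip_H (\<mu> s) z) - Im z) / s) \<longlongrightarrow> Im (gen_A \<gamma> \<tau> z)) (at 0 within {0..})"
proof -
  assume z: "Im z \<noteq> 0"
  have "((\<lambda>s. Im (recip_H (\<mu> s) z)) has_real_derivative Im (gen_A \<gamma> \<tau> (recip_H (\<mu> 0) z))) (at 0 within {0..})"
    using dH[OF z, of 0] has_vector_derivative_complex_iff by auto
  then show ?thesis using H0[OF z] by (simp add: has_field_derivative_iff)
qed

lemma contH: assumes z: "Im z \<noteq> 0" shows "continuous_on {0..} (\<lambda>s. recip_H (\<mu> s) z)"
  unfolding continuous_on_eq_continuous_within
proof
  fix x :: real assume "x \<in> {0..}"
  then show "continuous (at x within {0..}) (\<lambda>s. recip_H (\<mu> s) z)"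
    using has_vector_derivative_continuous[OF dH[OF z]] by simp
qed

lemma semi: "0 \<le> s \<Longrightarrow> 0 \<le> t \<Longrightarrow> Im z > 0 \<Longrightarrow>
    recip_H (\<mu> (s + t)) z = recip_H (\<mu> s) (recip_H (\<mu> t) z)"
  using sg unfolding monotone_conv_semigroup_def is_monotone_conv_def upper_half_def by auto

lemma weak: fixes f :: "real \<Rightarrow> real" assumes "continuous_on UNIV f" "bounded (range f)" shows "continuous_on {0..} (\<lambda>t. \<integral>x. f x \<partial>\<mu> t)"
proof -
  have w: "weakly_continuous_family \<mu>" using sg by (simp add: monotone_conv_semigroup_def)
  show ?thesis using w assms unfolding weakly_continuous_family_def by (elim allE[of _ f]) simp
qed

lemma mu0: "\<mu> 0 = return borel 0"
  using sg unfolding monotone_conv_semigroup_def by simp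

lemma ImHge: "0 \<le> s \<Longrightarrow> Im z > 0 \<Longrightarrow> Im z \<le> Im (recip_H (\<mu> s) z)"
  using ImH_ge[OF P sM] by blast

end


context msg begin

lemma partB:
  assumes bt: "bdd_below (msupp \<tau>)" and t0: "0 \<le> t"
  shows "bdd_below (msupp (\<mu> t))"
proof -
  obtain b0 where b0: "\<forall>x<b0. measure \<tau> {..x} = 0" using null_of_bdd[OF tf ts bt] by blast
  define a where "a = b0 - 1"
  have aet: "AE y in \<tau>. a < y" by (rule ae_gt[OF tf ts]) (use b0 in \<open>simp add: a_def\<close>)
  define c where "c = min a 0 - 1"
  have c1: "c \<le> -1" "c \<le> a - 1" by (auto simp: c_def)
  define mt where "mt = measure \<tau> (space \<tau>)"
  have mt0: "0 \<le> mt" by (simp add: mt_def)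
  define K where "K = (2 + a\<^sup>2) * mt"
  define Mb where "Mb = \<bar>\<gamma>\<bar> + (1 + \<bar>c\<bar> * \<bar>a\<bar>) * mt"
  have Mb0: "0 \<le> Mb" using mt0 by (simp add: Mb_def)
  interpret T: finite_measure \<tau> by (rule tf)
  have ReA: "Re (gen_A \<gamma> \<tau> w) \<le> Mb" if w: "Re w \<le> c" "Im w > 0" for w
  proof -
    have "(\<integral>y. Re (FA w y) \<partial>\<tau>) \<le> (\<integral>y. (1 + \<bar>c\<bar> * \<bar>a\<bar>) \<partial>\<tau>)"
    proof (rule integral_mono_AE)
      show "integrable \<tau> (\<lambda>y. Re (FA w y))" using FA_int[OF tf ts, of w] w by simp
      show "integrable \<tau> (\<lambda>y. 1 + \<bar>c\<bar> * \<bar>a\<bar>)" by simp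
      show "AE y in \<tau>. Re (FA w y) \<le> 1 + \<bar>c\<bar> * \<bar>a\<bar>"
        using aet by eventually_elim (rule Re_FA_bound[OF c1], use w in auto)
    qed
    also have "\<dots> = (1 + \<bar>c\<bar> * \<bar>a\<bar>) * mt" by (simp add: mt_def)
    finally show ?thesis using Re_A[OF tf ts, of w \<gamma>] w unfolding Mb_def by simp
  qed
  have ImA: "Im (gen_A \<gamma> \<tau> w) \<le> Im w * K" if w: "Re w \<le> c" "Im w > 0" for w
  proof -
    have "(\<integral>y. Im (FA w y) \<partial>\<tau>) \<le> (\<integral>y. Im w * (2 + a\<^sup>2) \<partial>\<tau>)"
    proof (rule integral_mono_AE)
      show "integrable \<tau> (\<lambda>y. Im (FA w y))" using FA_int[OF tf ts, of w] w by simp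
      show "integrable \<tau> (\<lambda>y. Im w * (2 + a\<^sup>2))" by simp
      show "AE y in \<tau>. Im (FA w y) \<le> Im w * (2 + a\<^sup>2)"
        using aet by eventually_elim (rule Im_FA_bound[OF c1], use w in auto)
    qed
    also have "\<dots> = Im w * K" by (simp add: mt_def K_def)
    finally show ?thesis using Im_A[OF tf ts, of w \<gamma>] w by simp
  qed
  define bb where "bb = c - Mb * t - 1"
  have main: "measure (\<mu> t) (ball x e) \<le> 2 * exp (K * t) * e\<^sup>2" if x: "x < bb" and e: "0 < e" for x e
  proof -
    define z where "z = Complex x e"
    have z0: "Im z > 0" "Im z \<noteq> 0" using e by (auto simp: z_def)
    define Hz where "Hz s = recip_H (\<mu> s) z" for s
    have Hz0: "Hz 0 = z" using H0[OF z0(2)] by (simp add: Hz_def)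
    have ImHz: "e \<le> Im (Hz s)" if "0 \<le> s" for s using ImHge[OF that z0(1)] by (simp add: Hz_def z_def)
    have cont: "continuous_on {0..} Hz" using contH[OF z0(2)] unfolding Hz_def by simp
    have contRe: "continuous_on S (\<lambda>s. Re (Hz s))" if "S \<subseteq> {0..}" for S
      using continuous_on_subset[OF cont that] by (intro continuous_intros)
    have contIm: "continuous_on S (\<lambda>s. Im (Hz s))" if "S \<subseteq> {0..}" for S
      using continuous_on_subset[OF cont that] by (intro continuous_intros)
    have xc: "x < c - 1" using x Mb0 t0 unfolding bb_def by (smt (verit) mult_nonneg_nonneg)
    have R: "Re (Hz s) \<le> c" if s: "0 \<le> s" "s \<le> t" for s
    proof (rule ccontr)
      assume "\<not> Re (Hz s) \<le> c"
      then have s2: "c < Re (Hz s)" by simp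
      define T where "T = {0..s} \<inter> (\<lambda>r. Re (Hz r)) -` {c..}"
      have cT: "closed T" unfolding T_def
        by (rule continuous_closed_preimage) (auto intro: contRe)
      have sT: "s \<in> T" using s s2 by (simp add: T_def)
      have bT: "bdd_below T" by (rule bdd_belowI[of _ 0]) (auto simp: T_def)
      define s1 where "s1 = Inf T"
      have s1T: "s1 \<in> T" unfolding s1_def using closed_contains_Inf[OF _ bT cT] sT by blast
      then have s1: "0 \<le> s1" "s1 \<le> s" "c \<le> Re (Hz s1)" by (auto simp: T_def)
      have below: "Re (Hz r) < c" if "0 \<le> r" "r < s1" for r
      proof (rule ccontr)
        assume "\<not> Re (Hz r) < c"
        then have "r \<in> T" using that s1 by (auto simp: T_def)
        then have "s1 \<le> r" unfolding s1_def by (rule cInf_lower[OF _ bT])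
        then show False using that by simp
      qed
      have "(\<lambda>r. Re (Hz r) - Mb * r) s1 \<le> (\<lambda>r. Re (Hz r) - Mb * r) 0"
      proof (rule nonincr[of 0 s1 "\<lambda>r. Re (Hz r) - Mb * r"])
        show "0 \<le> s1" by fact
        show "continuous_on {0..s1} (\<lambda>r. Re (Hz r) - Mb * r)"
          by (intro continuous_intros contRe) auto
        fix r assume r: "0 < r" "r < s1"
        have d: "((\<lambda>r. Re (Hz r) - Mb * r) has_real_derivative Re (gen_A \<gamma> \<tau> (Hz r)) - Mb) (at r)"
          using DERIV_diff[OF dRe_at[OF z0(2) r(1)] DERIV_cmult[OF DERIV_ident, where c=Mb]] unfolding Hz_def by simp
        have "Re (gen_A \<gamma> \<tau> (Hz r)) \<le> Mb"
          using ReA[of "Hz r"] below[of r] ImHz[of r] r e by simp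
        then show "\<exists>d. ((\<lambda>r. Re (Hz r) - Mb * r) has_real_derivative d) (at r) \<and> d \<le> 0"
          using d by auto
      qed
      then have "Re (Hz s1) \<le> x + Mb * s1" using Hz0 by (simp add: z_def)
      also have "\<dots> \<le> x + Mb * t" using s1 s Mb0 by (intro add_left_mono mult_left_mono) auto
      finally show False using s1 x unfolding bb_def by simp
    qed
    have I: "Im (Hz t) * exp (- K * t) \<le> Im (Hz 0) * exp (- K * 0)"
    proof (rule nonincr[of 0 t "\<lambda>r. Im (Hz r) * exp (- K * r)"])
      show "0 \<le> t" by fact
      show "continuous_on {0..t} (\<lambda>r. Im (Hz r) * exp (- K * r))"
        by (intro continuous_intros contIm) auto
      fix r assume r: "0 < r" "r < t"
      have d: "((\<lambda>r. Im (Hz r) * exp (- K * r)) has_real_derivative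
          Im (gen_A \<gamma> \<tau> (Hz r)) * exp (- K * r) + Im (Hz r) * (exp (- K * r) * (- K))) (at r)"
        using DERIV_mult'[OF dIm_at[OF z0(2) r(1)] DERIV_chain'[OF DERIV_cmult[OF DERIV_ident, where c="-K"] DERIV_exp]] unfolding Hz_def by (simp add: algebra_simps)
      have "Im (gen_A \<gamma> \<tau> (Hz r)) \<le> Im (Hz r) * K"
        using ImA[of "Hz r"] R[of r] ImHz[of r] r e by simp
      then have "Im (gen_A \<gamma> \<tau> (Hz r)) * exp (- K * r) + Im (Hz r) * (exp (- K * r) * (- K)) \<le> 0"
        by (simp add: algebra_simps mult_right_mono)
      then show "\<exists>d. ((\<lambda>r. Im (Hz r) * exp (- K * r)) has_real_derivative d) (at r) \<and> d \<le> 0"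
        using d by blast
    qed
    have It: "Im (Hz t) \<le> e * exp (K * t)"
    proof -
      have "Im (Hz t) * exp (- K * t) \<le> e" using I Hz0 by (simp add: z_def)
      then have "Im (Hz t) * exp (- K * t) * exp (K * t) \<le> e * exp (K * t)" by (simp add: mult_right_mono)
      then show ?thesis by (simp add: exp_minus field_simps)
    qed
    have Rt: "Re (Hz t) \<le> -1" using R[of t] t0 c1 by simp
    have Hne: "Hz t \<noteq> 0" using ImHz[OF t0] e by auto
    have cm1: "1 \<le> (cmod (Hz t))\<^sup>2"
    proof -
      have "1 \<le> \<bar>Re (Hz t)\<bar>" using Rt by simp
      also have "\<dots> \<le> cmod (Hz t)" by (rule abs_Re_le_cmod)
      finally show ?thesis by (simp add: one_le_power)
    qed
    have "- Im (cauchy_G (\<mu> t) z) = Im (Hz t) / (cmod (Hz t))\<^sup>2"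
      unfolding G_inv_H[OF P[OF t0] sM[OF t0] z0(1)] Hz_def[symmetric]
      by (simp add: Im_divide' )
    also have "\<dots> \<le> Im (Hz t)"
    proof -
      have "Im (Hz t) * 1 \<le> Im (Hz t) * (cmod (Hz t))\<^sup>2"
        using cm1 ImHz[OF t0] e by (intro mult_left_mono) auto
      moreover have "0 < (cmod (Hz t))\<^sup>2" using Hne by simp
      ultimately show ?thesis by (simp add: divide_le_eq)
    qed
    finally have g: "- Im (cauchy_G (\<mu> t) z) \<le> e * exp (K * t)" using It by simp
    have "measure (\<mu> t) (ball x e) \<le> 2 * e * (- Im (cauchy_G (\<mu> t) z))"
      using ball_G[OF P[OF t0] sM[OF t0] e] by (simp add: z_def)
    also have "\<dots> \<le> 2 * e * (e * exp (K * t))" using g e by (intro mult_left_mono) auto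
    finally show ?thesis by (simp add: power2_eq_square algebra_simps)
  qed
  show ?thesis
  proof (rule supp_crit[OF prob_space.finite_measure[OF P[OF t0]] sM[OF t0], of bb])
    fix x assume "x < bb"
    then show "\<exists>C e0. 0 < e0 \<and> (\<forall>e. 0 < e \<and> e < e0 \<longrightarrow> measure (\<mu> t) (ball x e) \<le> C * e\<^sup>2)"
      using main by (intro exI[of _ "2 * exp (K * t)"] exI[of _ 1]) auto
  qed
qed

end


lemma onep [simp]: "(1::real) + y\<^sup>2 \<noteq> 0" "0 < (1::real) + y\<^sup>2"
proof -
  have "0 \<le> y\<^sup>2" by simp
  then show "(1::real) + y\<^sup>2 \<noteq> 0" "0 < (1::real) + y\<^sup>2" by linarith+
qed

lemma twop [simp]: "0 < 2 * (a::real)\<^sup>2 + 2"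
proof -
  have "0 \<le> a\<^sup>2" by simp
  then show ?thesis by linarith
qed

lemma ff_sq_lower:
  fixes w :: complex and y :: real
  assumes "Im w \<noteq> 0"
  shows "(1 / (1 + y\<^sup>2)) / (2 * (cmod w)\<^sup>2 + 2) \<le> (cmod (ff w y))\<^sup>2"
proof -
  have nz: "w - of_real y \<noteq> 0" using assms by (auto simp: complex_eq_iff)
  have "cmod (w - of_real y) \<le> cmod w + \<bar>y\<bar>" using norm_triangle_ineq4[of w "of_real y"] by simp
  then have "(cmod (w - of_real y))\<^sup>2 \<le> (cmod w + \<bar>y\<bar>)\<^sup>2" by (intro power_mono) auto
  also have "\<dots> \<le> 2 * (cmod w)\<^sup>2 + 2 * y\<^sup>2"
    using sum_squares_bound[of "cmod w" "\<bar>y\<bar>"] by (simp add: power2_sum algebra_simps)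
  also have "\<dots> \<le> (2 * (cmod w)\<^sup>2 + 2) * (1 + y\<^sup>2)" by (simp add: algebra_simps)
  finally have a: "(cmod (w - of_real y))\<^sup>2 \<le> (2 * (cmod w)\<^sup>2 + 2) * (1 + y\<^sup>2)" .
  have p: "0 < (cmod (w - of_real y))\<^sup>2" using nz by simp
  have "(1 / (1 + y\<^sup>2)) / (2 * (cmod w)\<^sup>2 + 2) = 1 / ((2 * (cmod w)\<^sup>2 + 2) * (1 + y\<^sup>2))"
    by (simp add: field_simps)
  also have "\<dots> \<le> 1 / (cmod (w - of_real y))\<^sup>2" using a p by (intro divide_left_mono) (auto intro!: mult_pos_pos)
  also have "\<dots> = (cmod (ff w y))\<^sup>2" by (simp add: ff_def norm_divide power_divide)
  finally show ?thesis .
qed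

context msg begin

lemma negReG_ge:
  fixes M :: "real measure"
  assumes P: "prob_space M" and sM: "sets M = sets borel" and ae: "AE y in M. a < y"
    and x: "x < a" and e: "0 < e" "e \<le> 1"
  shows "(\<integral>y. (y - x) / ((y - x)\<^sup>2 + 1) \<partial>M) \<le> cmod (cauchy_G M (Complex x e))"
proof -
  interpret prob_space M by fact
  have "(\<integral>y. (y - x) / ((y - x)\<^sup>2 + 1) \<partial>M) \<le> (\<integral>y. (y - x) / ((y - x)\<^sup>2 + e\<^sup>2) \<partial>M)"
  proof (rule integral_mono_AE)
    show "integrable M (\<lambda>y. (y - x) / ((y - x)\<^sup>2 + e\<^sup>2))"
    proof -
      have "integrable M (\<lambda>y. - ((Re (Complex x e) - y) / ((y - Re (Complex x e))\<^sup>2 + (Im (Complex x e))\<^sup>2)))"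
        using int_ReP[OF finite_measure_axioms sM, of "Complex x e"] e by simp
      then show ?thesis by (simp add: minus_divide_left)
    qed
    show "integrable M (\<lambda>y. (y - x) / ((y - x)\<^sup>2 + 1))"
    proof -
      have "integrable M (\<lambda>y. - ((Re (Complex x 1) - y) / ((y - Re (Complex x 1))\<^sup>2 + (Im (Complex x 1))\<^sup>2)))"
        using int_ReP[OF finite_measure_axioms sM, of "Complex x 1"] by simp
      then show ?thesis by (simp add: minus_divide_left)
    qed
    show "AE y in M. (y - x) / ((y - x)\<^sup>2 + 1) \<le> (y - x) / ((y - x)\<^sup>2 + e\<^sup>2)"
      using ae
    proof eventually_elim
      case (elim y)
      have "e\<^sup>2 \<le> 1" using e by (simp add: power_le_one)
      moreover have "0 < (y - x)\<^sup>2 + e\<^sup>2" using e by (simp add: add_nonneg_pos)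
      ultimately show ?case using elim x by (intro divide_left_mono) (auto intro!: mult_pos_pos)
    qed
  qed
  also have "\<dots> = - Re (cauchy_G M (Complex x e))"
  proof -
    have "Re (cauchy_G M (Complex x e)) = (\<integral>y. (x - y) / ((y - x)\<^sup>2 + e\<^sup>2) \<partial>M)"
      using ReG[OF finite_measure_axioms sM, of "Complex x e"] e by simp
    also have "\<dots> = (\<integral>y. - ((y - x) / ((y - x)\<^sup>2 + e\<^sup>2)) \<partial>M)" by (simp add: minus_divide_left)
    finally show ?thesis by simp
  qed
  also have "\<dots> \<le> cmod (cauchy_G M (Complex x e))" using abs_Re_le_cmod[of "cauchy_G M (Complex x e)"] by simp
  finally show ?thesis .
qed

lemma gx_int:
  fixes M :: "real measure"
  assumes P: "prob_space M" and sM: "sets M = sets borel"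
  shows "integrable M (\<lambda>y. (y - x) / ((y - x)\<^sup>2 + 1))"
proof -
  interpret prob_space M by fact
  have "integrable M (\<lambda>y. - ((Re (Complex x 1) - y) / ((y - Re (Complex x 1))\<^sup>2 + (Im (Complex x 1))\<^sup>2)))"
    using int_ReP[OF finite_measure_axioms sM, of "Complex x 1"] by simp
  then show ?thesis by (simp add: minus_divide_left)
qed

lemma unif:
  assumes T0: "0 < T" and bd: "bdd_below (msupp (\<mu> T))"
  shows "\<exists>b'. \<forall>t. 0 \<le> t \<and> t \<le> T \<longrightarrow> (\<forall>q<b'. measure (\<mu> t) {..q} = 0)"
proof -
  have T0': "0 \<le> T" using T0 by simp
  interpret PT: prob_space "\<mu> T" by (rule P[OF T0'])
  obtain b where b: "\<forall>x<b. measure (\<mu> T) {..x} = 0" using null_of_bdd[OF PT.finite_measure_axioms sM[OF T0'] bd] by blast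
  define b1 where "b1 = b - 1"
  have aeT: "AE y in \<mu> T. b1 < y" by (rule ae_gt[OF PT.finite_measure_axioms sM[OF T0']]) (use b in \<open>simp add: b1_def\<close>)
  define \<kappa> where "\<kappa> s = (\<integral>y. 1 / (1 + y\<^sup>2) \<partial>\<mu> s)" for s
  have kint: "integrable (\<mu> s) (\<lambda>y. 1 / (1 + y\<^sup>2))" if "0 \<le> s" for s
  proof -
    interpret prob_space "\<mu> s" by (rule P[OF that])
    show ?thesis
    proof (rule integrable_const_bound[where B=1])
      show "AE x in \<mu> s. norm (1 / (1 + x\<^sup>2)) \<le> 1" by (auto simp: add_pos_nonneg)
      show "(\<lambda>y. 1 / (1 + y\<^sup>2)) \<in> borel_measurable (\<mu> s)" by (rule meas_borel[OF sM[OF that]]) measurable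
    qed
  qed
  have kpos: "0 < \<kappa> s" if "0 \<le> s" for s
    unfolding \<kappa>_def by (rule pos_int[OF P[OF that] kint[OF that]]) (auto simp: add_pos_nonneg)
  have kcont: "continuous_on {0..} \<kappa>"
    unfolding \<kappa>_def
  proof (rule weak)
    show "continuous_on UNIV (\<lambda>y::real. 1 / (1 + y\<^sup>2))"
      by (intro continuous_intros) (auto simp: add_pos_nonneg)
    show "bounded (range (\<lambda>y::real. 1 / (1 + y\<^sup>2)))"
      unfolding bounded_iff by (intro exI[of _ 1]) (auto simp: add_pos_nonneg)
  qed
  obtain s0 where s0: "s0 \<in> {0..T}" "\<And>s. s \<in> {0..T} \<Longrightarrow> \<kappa> s0 \<le> \<kappa> s"
    using continuous_attains_inf[OF compact_Icc _ continuous_on_subset[OF kcont], of 0 T] T0 by auto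
  define \<kappa>0 where "\<kappa>0 = \<kappa> s0"
  have k0: "0 < \<kappa>0" using kpos s0(1) by (simp add: \<kappa>0_def)
  define R where "R = 1 + 4 / \<kappa>0"
  define b' where "b' = b1 - R"
  define cx where "cx x = (\<integral>y. (y - x) / ((y - x)\<^sup>2 + 1) \<partial>\<mu> T)" for x
  have cxpos: "0 < cx x" if "x < b1" for x
    unfolding cx_def
  proof (rule pos_int[OF P[OF T0'] gx_int[OF P[OF T0'] sM[OF T0']]])
    show "AE y in \<mu> T. 0 < (y - x) / ((y - x)\<^sup>2 + 1)"
      using aeT by eventually_elim (use that in \<open>auto intro!: divide_pos_pos add_nonneg_pos\<close>)
  qed
  have main: "measure (\<mu> t) (ball x e) \<le> (2 / ((b1 - x)\<^sup>2 * (cx x)\<^sup>2)) * e\<^sup>2"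
    if t: "0 \<le> t" "t \<le> T" and x: "x < b'" and e: "0 < e" "e < 1" for t x e
  proof -
    define z where "z = Complex x e"
    have z0: "0 < Im z" "Im z \<noteq> 0" using e by (auto simp: z_def)
    define s where "s = T - t"
    have s0': "0 \<le> s" using t by (simp add: s_def)
    define w where "w = recip_H (\<mu> t) z"
    have wI: "e \<le> Im w" using ImHge[OF t(1) z0(1)] by (simp add: w_def z_def)
    have w0: "0 < Im w" using wI e by simp
    have HT: "recip_H (\<mu> T) z = recip_H (\<mu> s) w"
      using semi[OF s0' t(1) z0(1)] by (simp add: s_def w_def)
    have GT: "cauchy_G (\<mu> T) z = cauchy_G (\<mu> s) w"
      using G_inv_H[OF P[OF T0'] sM[OF T0'] z0(1)] G_inv_H[OF P[OF s0'] sM[OF s0'] w0] HT by simp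
    have "0 \<le> 4 / \<kappa>0" using k0 by simp
    then have xb1: "x < b1" "1 \<le> b1 - x" "R \<le> b1 - x" using x unfolding b'_def R_def by linarith+
    have ST: "SS (\<mu> T) z \<le> 1 / (b1 - x)\<^sup>2"
    proof -
      have "SS (\<mu> T) z \<le> (\<integral>y. 1 / (b1 - x)\<^sup>2 \<partial>\<mu> T)" unfolding SS_def
      proof (rule integral_mono_AE)
        show "integrable (\<mu> T) (\<lambda>y. (cmod (ff z y))\<^sup>2)" by (rule int_sq[OF P[OF T0'] sM[OF T0'] z0(1)])
        show "AE y in \<mu> T. (cmod (ff z y))\<^sup>2 \<le> 1 / (b1 - x)\<^sup>2"
          using aeT
        proof eventually_elim
          case (elim y)
          have "(b1 - x)\<^sup>2 \<le> (y - x)\<^sup>2" using elim xb1 by (intro power_mono) auto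
          also have "\<dots> \<le> (y - x)\<^sup>2 + e\<^sup>2" by simp
          finally have "(b1 - x)\<^sup>2 \<le> (y - x)\<^sup>2 + e\<^sup>2" .
          moreover have "0 < (b1 - x)\<^sup>2" using xb1 by simp
          ultimately show ?case unfolding cmod_ff_sq by (simp add: z_def frac_le)
        qed
      qed simp
      then show ?thesis by (simp add: PT.prob_space)
    qed
    have Ss: "\<kappa>0 / (2 * (cmod w)\<^sup>2 + 2) \<le> SS (\<mu> s) w"
    proof -
      have "\<kappa>0 \<le> \<kappa> s" using s0(2)[of s] t by (simp add: \<kappa>0_def s_def)
      then have "\<kappa>0 / (2 * (cmod w)\<^sup>2 + 2) \<le> \<kappa> s / (2 * (cmod w)\<^sup>2 + 2)"
        by (intro divide_right_mono) auto
      also have "\<kappa> s / (2 * (cmod w)\<^sup>2 + 2) = (\<integral>y. (1 / (1 + y\<^sup>2)) / (2 * (cmod w)\<^sup>2 + 2) \<partial>\<mu> s)"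
        unfolding \<kappa>_def by (rule integral_divide_zero[symmetric])
      also have "\<dots> \<le> SS (\<mu> s) w" unfolding SS_def
      proof (rule integral_mono)
        show "integrable (\<mu> s) (\<lambda>y. 1 / (1 + y\<^sup>2) / (2 * (cmod w)\<^sup>2 + 2))"
          using integrable_divide_zero[OF kint[OF s0'], of "2 * (cmod w)\<^sup>2 + 2"] .
        show "integrable (\<mu> s) (\<lambda>y. (cmod (ff w y))\<^sup>2)" by (rule int_sq[OF P[OF s0'] sM[OF s0'] w0])
        fix y show "1 / (1 + y\<^sup>2) / (2 * (cmod w)\<^sup>2 + 2) \<le> (cmod (ff w y))\<^sup>2"
          using ff_sq_lower w0 by simp
      qed
      finally show ?thesis .
    qed
    have eqIm: "Im w * SS (\<mu> s) w = e * SS (\<mu> T) z"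
      using ImG_SS[OF P[OF s0'] sM[OF s0'] w0] ImG_SS[OF P[OF T0'] sM[OF T0'] z0(1)] GT
      by (simp add: z_def)
    have wbig: "1 \<le> (cmod w)\<^sup>2"
    proof -
      have "e * (\<kappa>0 / (2 * (cmod w)\<^sup>2 + 2)) \<le> Im w * SS (\<mu> s) w"
        using wI Ss e k0 by (intro mult_mono) auto
      also have "\<dots> \<le> e * (1 / (b1 - x)\<^sup>2)" unfolding eqIm using ST e by (intro mult_left_mono) auto
      finally have "e * (\<kappa>0 / (2 * (cmod w)\<^sup>2 + 2)) \<le> e * (1 / (b1 - x)\<^sup>2)" .
      then have "\<kappa>0 / (2 * (cmod w)\<^sup>2 + 2) \<le> 1 / (b1 - x)\<^sup>2" using e(1) by (simp only: mult_le_cancel_left_pos)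
      then have a: "\<kappa>0 * (b1 - x)\<^sup>2 \<le> 2 * (cmod w)\<^sup>2 + 2"
        using xb1 by (simp add: field_simps add_pos_nonneg)
      have "4 / \<kappa>0 \<le> b1 - x" using xb1 by (simp add: R_def)
      also have "b1 - x \<le> (b1 - x)\<^sup>2" using xb1 by (simp add: power2_eq_square)
      finally have "4 \<le> \<kappa>0 * (b1 - x)\<^sup>2" using k0 by (simp add: field_simps)
      then show ?thesis using a by simp
    qed
    have Hne: "w \<noteq> 0" using w0 by auto
    have g1: "- Im (cauchy_G (\<mu> t) z) \<le> Im w"
    proof -
      have "- Im (cauchy_G (\<mu> t) z) = Im w / (cmod w)\<^sup>2"
        unfolding G_inv_H[OF P[OF t(1)] sM[OF t(1)] z0(1)] w_def[symmetric] by (simp add: Im_divide')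
      also have "\<dots> \<le> Im w"
      proof -
        have "Im w * 1 \<le> Im w * (cmod w)\<^sup>2" using wbig w0 by (intro mult_left_mono) auto
        moreover have "0 < (cmod w)\<^sup>2" using Hne by simp
        ultimately show ?thesis by (simp add: divide_le_eq)
      qed
      finally show ?thesis .
    qed
    have g2: "Im w \<le> Im (recip_H (\<mu> T) z)" using ImHge[OF s0' w0] HT by simp
    have cxG: "cx x \<le> cmod (cauchy_G (\<mu> T) z)"
      unfolding cx_def z_def by (rule negReG_ge[OF P[OF T0'] sM[OF T0'] aeT]) (use xb1 e in auto)
    have cx0: "0 < cx x" using cxpos xb1 by simp
    have g3: "Im (recip_H (\<mu> T) z) \<le> e / ((b1 - x)\<^sup>2 * (cx x)\<^sup>2)"
    proof -
      have "Im (recip_H (\<mu> T) z) = e * SS (\<mu> T) z / (cmod (cauchy_G (\<mu> T) z))\<^sup>2"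
        using ImH[OF P[OF T0'] sM[OF T0'] z0(1)] by (simp add: z_def)
      also have "\<dots> \<le> e * (1 / (b1 - x)\<^sup>2) / (cx x)\<^sup>2"
      proof (rule frac_le)
        show "0 \<le> e * (1 / (b1 - x)\<^sup>2)" using e by simp
        show "e * SS (\<mu> T) z \<le> e * (1 / (b1 - x)\<^sup>2)" using ST e by (intro mult_left_mono) auto
        show "0 < (cx x)\<^sup>2" using cx0 by simp
        show "(cx x)\<^sup>2 \<le> (cmod (cauchy_G (\<mu> T) z))\<^sup>2" using cxG cx0 by (intro power_mono) auto
      qed
      finally show ?thesis by simp
    qed
    have "measure (\<mu> t) (ball x e) \<le> 2 * e * (- Im (cauchy_G (\<mu> t) z))"
      using ball_G[OF P[OF t(1)] sM[OF t(1)] e(1)] by (simp add: z_def)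
    also have "\<dots> \<le> 2 * e * (e / ((b1 - x)\<^sup>2 * (cx x)\<^sup>2))"
      using g1 g2 g3 e by (intro mult_left_mono) auto
    finally show ?thesis by (simp add: power2_eq_square algebra_simps)
  qed
  show ?thesis
  proof (intro exI[of _ b'] allI impI)
    fix t q assume t: "0 \<le> t \<and> t \<le> T" and q: "q < b'"
    show "measure (\<mu> t) {..q} = 0"
    proof (rule supp_core[OF prob_space.finite_measure[OF P] sM, of t b' q])
      fix x assume x: "x < b'"
      show "\<exists>C e0. 0 < e0 \<and> (\<forall>e. 0 < e \<and> e < e0 \<longrightarrow> measure (\<mu> t) (ball x e) \<le> C * e\<^sup>2)"
        using main[of t x] t x by (intro exI[of _ "2 / ((b1 - x)\<^sup>2 * (cx x)\<^sup>2)"] exI[of _ 1]) auto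
    qed (use t q in auto)
  qed
qed

end


lemma onep2 [simp]: "(a::real)\<^sup>2 + 1 \<noteq> 0" "0 < (a::real)\<^sup>2 + 1"
proof -
  have "0 \<le> a\<^sup>2" by simp
  then show "(a::real)\<^sup>2 + 1 \<noteq> 0" "0 < (a::real)\<^sup>2 + 1" by linarith+
qed

context msg begin

lemma partC:
  assumes T0: "0 < T" and bd: "bdd_below (msupp (\<mu> T))"
  shows "bdd_below (msupp \<tau>)"
proof -
  obtain b' where b': "\<And>t q. 0 \<le> t \<Longrightarrow> t \<le> T \<Longrightarrow> q < b' \<Longrightarrow> measure (\<mu> t) {..q} = 0"
    using unif[OF T0 bd] by blast
  define a where "a = b' - 1"
  have aet: "AE y in \<mu> t. a < y" if "0 \<le> t" "t \<le> T" for t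
    by (rule ae_gt[OF prob_space.finite_measure[OF P[OF that(1)]] sM[OF that(1)]])
       (use b' that in \<open>simp add: a_def\<close>)
  define q where "q = min (-1) (a - 1)"
  define K0 where "K0 = 2 + a\<^sup>2"
  show ?thesis
  proof (rule supp_crit[OF tf ts, of q])
    fix x assume xq: "x < q"
    then have x1: "x \<le> -1" "x \<le> a - 1" "x < a" by (auto simp: q_def)
    define gx where "gx y = (y - x) / ((y - x)\<^sup>2 + 1)" for y
    have gcont: "continuous_on UNIV gx" unfolding gx_def
      by (intro continuous_intros) (auto simp: add_nonneg_pos)
    have gbd: "bounded (range gx)"
      unfolding bounded_iff
    proof (intro exI[of _ 1] ballI)
      fix v assume "v \<in> range gx"
      then obtain y where v: "v = gx y" by auto
      have d: "0 < (y - x)\<^sup>2 + 1" by (simp add: add_nonneg_pos)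
      have "\<bar>y - x\<bar> \<le> (y - x)\<^sup>2 + 1"
      proof (cases "\<bar>y - x\<bar> \<le> 1")
        case True then show ?thesis by (smt (verit) zero_le_power2)
      next
        case False
        have "\<bar>y - x\<bar> * 1 \<le> \<bar>y - x\<bar> * \<bar>y - x\<bar>" by (rule mult_left_mono) (use False in auto)
        moreover have "\<bar>y - x\<bar> * \<bar>y - x\<bar> = (y - x)\<^sup>2" by (simp add: power2_eq_square)
        ultimately have "\<bar>y - x\<bar> \<le> (y - x)\<^sup>2" by simp
        then show ?thesis by simp
      qed
      then show "norm v \<le> 1" unfolding v gx_def using d by (simp add: abs_divide divide_le_eq)
    qed
    have gc: "continuous_on {0..} (\<lambda>t. \<integral>y. gx y \<partial>\<mu> t)" by (rule weak[OF gcont gbd])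
    have g0: "(\<integral>y. gx y \<partial>\<mu> 0) = gx 0"
      unfolding mu0 by (rule integral_return) (auto intro: borel_measurable_continuous_onI gcont)
    define cc where "cc = gx 0 / 2"
    have gx0: "0 < gx 0" unfolding gx_def using x1 by (intro divide_pos_pos) auto
    have cc0: "0 < cc" using gx0 by (simp add: cc_def)
    have "continuous (at 0 within {0..}) (\<lambda>t. \<integral>y. gx y \<partial>\<mu> t)"
      using gc unfolding continuous_on_eq_continuous_within by simp
    then have "((\<lambda>t. \<integral>y. gx y \<partial>\<mu> t) \<longlongrightarrow> (\<integral>y. gx y \<partial>\<mu> 0)) (at 0 within {0..})"
      unfolding continuous_within .
    then have "((\<lambda>t. \<integral>y. gx y \<partial>\<mu> t) \<longlongrightarrow> gx 0) (at 0 within {0..})"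
      unfolding g0 .
    then have "eventually (\<lambda>t. cc < (\<integral>y. gx y \<partial>\<mu> t)) (at 0 within {0..})"
      by (rule order_tendstoD) (use gx0 in \<open>simp add: cc_def\<close>)
    then obtain t1 where t1: "0 < t1" "\<forall>t\<in>{0..}. t \<noteq> 0 \<and> dist t 0 < t1 \<longrightarrow> cc < (\<integral>y. gx y \<partial>\<mu> t)"
      unfolding eventually_at by (elim exE conjE) (rule that)
    define t2 where "t2 = min t1 T"
    have t2: "0 < t2" using t1 T0 by (simp add: t2_def)
    define i where "i = \<i>"
    have key: "Im (gen_A \<gamma> \<tau> (Complex x e)) \<le> (e * K0\<^sup>2 / cc\<^sup>2) * Im (gen_A \<gamma> \<tau> \<i>)"
      if e: "0 < e" "e < 1" for e
    proof -
      define z where "z = Complex x e"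
      have z0: "0 < Im z" "Im z \<noteq> 0" using e by (auto simp: z_def)
      have ineq: "(Im (recip_H (\<mu> t) z) - Im z) / t \<le> (e * K0\<^sup>2 / cc\<^sup>2) * ((Im (recip_H (\<mu> t) \<i>) - Im \<i>) / t)"
        if t: "0 < t" "t < t2" for t
      proof -
        have t0: "0 \<le> t" "t \<le> T" using t by (auto simp: t2_def)
        interpret PM: prob_space "\<mu> t" by (rule P[OF t0(1)])
        have ccG: "cc \<le> cmod (cauchy_G (\<mu> t) z)"
        proof -
          have "cc < (\<integral>y. gx y \<partial>\<mu> t)" using t1(2) t by (auto simp: t2_def dist_real_def)
          also have "\<dots> \<le> cmod (cauchy_G (\<mu> t) z)"
            unfolding gx_def z_def by (rule negReG_ge[OF P[OF t0(1)] sM[OF t0(1)] aet[OF t0]]) (use x1 e in auto)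
          finally show ?thesis by simp
        qed
        have DDc: "DD (\<mu> t) z \<le> K0\<^sup>2 * DD (\<mu> t) \<i>"
          unfolding z_def K0_def by (rule DD_compare[OF P[OF t0(1)] sM[OF t0(1)] aet[OF t0] x1(1,2) e(1)])
        have iz: "0 < Im \<i>" by simp
        have Gi0: "0 < (cmod (cauchy_G (\<mu> t) \<i>))\<^sup>2" using G_ne0[OF P[OF t0(1)] sM[OF t0(1)] iz] by simp
        have Gi1: "(cmod (cauchy_G (\<mu> t) \<i>))\<^sup>2 \<le> 1"
        proof -
          have "(cmod (cauchy_G (\<mu> t) \<i>))\<^sup>2 \<le> SS (\<mu> t) \<i>" by (rule G_sq_le[OF P[OF t0(1)] sM[OF t0(1)] iz])
          also have "SS (\<mu> t) \<i> \<le> (\<integral>y. 1 \<partial>\<mu> t)" unfolding SS_def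
          proof (rule integral_mono)
            show "integrable (\<mu> t) (\<lambda>y. (cmod (ff \<i> y))\<^sup>2)" by (rule int_sq[OF P[OF t0(1)] sM[OF t0(1)] iz])
            fix y show "(cmod (ff \<i> y))\<^sup>2 \<le> 1" unfolding cmod_ff_sq by (simp add: add_nonneg_pos)
          qed simp
          finally show ?thesis by (simp add: PM.prob_space)
        qed
        have DDi0: "0 \<le> DD (\<mu> t) \<i>" by (rule DD_nonneg[OF P[OF t0(1)] sM[OF t0(1)] iz])
        have phz: "Im (recip_H (\<mu> t) z) - Im z = e * (DD (\<mu> t) z / 2) / (cmod (cauchy_G (\<mu> t) z))\<^sup>2"
          using ImH_diff[OF P[OF t0(1)] sM[OF t0(1)] z0(1)] by (simp add: z_def)
        have phi: "Im (recip_H (\<mu> t) \<i>) - Im \<i> = (DD (\<mu> t) \<i> / 2) / (cmod (cauchy_G (\<mu> t) \<i>))\<^sup>2"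
          using ImH_diff[OF P[OF t0(1)] sM[OF t0(1)] iz] by simp
        have A: "e * (DD (\<mu> t) z / 2) / (cmod (cauchy_G (\<mu> t) z))\<^sup>2 \<le> e * (K0\<^sup>2 * (DD (\<mu> t) \<i> / 2)) / cc\<^sup>2"
        proof (rule frac_le)
          show "0 \<le> e * (K0\<^sup>2 * (DD (\<mu> t) \<i> / 2))" using e DDi0 by simp
          show "e * (DD (\<mu> t) z / 2) \<le> e * (K0\<^sup>2 * (DD (\<mu> t) \<i> / 2))" using DDc e by (intro mult_left_mono) auto
          show "0 < cc\<^sup>2" using cc0 by simp
          show "cc\<^sup>2 \<le> (cmod (cauchy_G (\<mu> t) z))\<^sup>2" using ccG cc0 by (intro power_mono) auto
        qed
        have B: "DD (\<mu> t) \<i> / 2 \<le> (DD (\<mu> t) \<i> / 2) / (cmod (cauchy_G (\<mu> t) \<i>))\<^sup>2"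
          using Gi0 Gi1 DDi0 by (simp add: le_divide_eq mult_left_le)
        have "Im (recip_H (\<mu> t) z) - Im z \<le> (e * K0\<^sup>2 / cc\<^sup>2) * (DD (\<mu> t) \<i> / 2)"
          using A unfolding phz by (simp add: field_simps)
        also have "\<dots> \<le> (e * K0\<^sup>2 / cc\<^sup>2) * (Im (recip_H (\<mu> t) \<i>) - Im \<i>)"
          unfolding phi using B e cc0 by (intro mult_left_mono) auto
        finally have fin: "Im (recip_H (\<mu> t) z) - Im z \<le> (e * K0\<^sup>2 / cc\<^sup>2) * (Im (recip_H (\<mu> t) \<i>) - Im \<i>)" .
        have "(Im (recip_H (\<mu> t) z) - Im z) / t \<le> ((e * K0\<^sup>2 / cc\<^sup>2) * (Im (recip_H (\<mu> t) \<i>) - Im \<i>)) / t"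
          using fin t by (intro divide_right_mono) auto
        then show ?thesis by (simp only: times_divide_eq_right)
      qed
      have lz: "((\<lambda>t. (Im (recip_H (\<mu> t) z) - Im z) / t) \<longlongrightarrow> Im (gen_A \<gamma> \<tau> z)) (at_right 0)"
        by (rule tendsto_within_subset[OF dIm_0[OF z0(2)]]) auto
      have li: "((\<lambda>t. (e * K0\<^sup>2 / cc\<^sup>2) * ((Im (recip_H (\<mu> t) \<i>) - Im \<i>) / t)) \<longlongrightarrow> (e * K0\<^sup>2 / cc\<^sup>2) * Im (gen_A \<gamma> \<tau> \<i>)) (at_right 0)"
        by (intro tendsto_mult_left tendsto_within_subset[OF dIm_0[of \<i>]]) auto
      have ev: "eventually (\<lambda>t. (Im (recip_H (\<mu> t) z) - Im z) / t \<le> (e * K0\<^sup>2 / cc\<^sup>2) * ((Im (recip_H (\<mu> t) \<i>) - Im \<i>) / t)) (at_right 0)"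
        unfolding eventually_at_right_field
      proof (intro exI[of _ t2] conjI allI impI)
        show "0 < t2" by (rule t2)
        fix t :: real assume "0 < t" "t < t2"
        then show "(Im (recip_H (\<mu> t) z) - Im z) / t \<le> (e * K0\<^sup>2 / cc\<^sup>2) * ((Im (recip_H (\<mu> t) \<i>) - Im \<i>) / t)"
          by (rule ineq)
      qed
      have "Im (gen_A \<gamma> \<tau> z) \<le> (e * K0\<^sup>2 / cc\<^sup>2) * Im (gen_A \<gamma> \<tau> \<i>)"
        by (rule tendsto_le[OF trivial_limit_at_right_real li lz ev])
      then show ?thesis by (simp add: z_def)
    qed
    have "\<forall>e. 0 < e \<and> e < 1 \<longrightarrow> measure \<tau> (ball x e) \<le> (2 * K0\<^sup>2 / cc\<^sup>2 * Im (gen_A \<gamma> \<tau> \<i>)) * e\<^sup>2"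
    proof (intro allI impI)
      fix e :: real assume e: "0 < e \<and> e < 1"
      have "measure \<tau> (ball x e) \<le> 2 * e * Im (gen_A \<gamma> \<tau> (Complex x e))"
        by (rule ball_A[OF tf ts]) (use e in auto)
      also have "\<dots> \<le> 2 * e * ((e * K0\<^sup>2 / cc\<^sup>2) * Im (gen_A \<gamma> \<tau> \<i>))"
        using key[of e] e by (intro mult_left_mono) auto
      finally show "measure \<tau> (ball x e) \<le> (2 * K0\<^sup>2 / cc\<^sup>2 * Im (gen_A \<gamma> \<tau> \<i>)) * e\<^sup>2"
        by (simp add: power2_eq_square algebra_simps)
    qed
    then show "\<exists>C e0. 0 < e0 \<and> (\<forall>e. 0 < e \<and> e < e0 \<longrightarrow> measure \<tau> (ball x e) \<le> C * e\<^sup>2)"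
      by (intro exI[of _ "2 * K0\<^sup>2 / cc\<^sup>2 * Im (gen_A \<gamma> \<tau> \<i>)"] exI[of _ 1]) simp
  qed
qed

end

theorem theorem6p4:
  fixes \<mu> :: "real \<Rightarrow> real measure" and \<gamma> :: real and \<tau> :: "real measure"
  assumes "monotone_conv_semigroup \<mu>"
    and "associated_pair \<mu> \<gamma> \<tau>"
  shows "((\<exists>t0>0. bdd_below (msupp (\<mu> t0))) \<longleftrightarrow> (\<forall>t\<ge>0. bdd_below (msupp (\<mu> t))))
       \<and> ((\<forall>t\<ge>0. bdd_below (msupp (\<mu> t))) \<longleftrightarrow> bdd_below (msupp \<tau>))"
proof -
  interpret msg \<mu> \<gamma> \<tau> using assms by (rule msg.intro)
  have A: "bdd_below (msupp \<tau>)" if "\<exists>t0>0. bdd_below (msupp (\<mu> t0))"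
  proof -
    from that obtain t0 where "0 < t0" "bdd_below (msupp (\<mu> t0))" by blast
    then show ?thesis by (rule partC)
  qed
  have B: "\<forall>t\<ge>0. bdd_below (msupp (\<mu> t))" if "bdd_below (msupp \<tau>)"
  proof (intro allI impI)
    fix t :: real assume "0 \<le> t"
    then show "bdd_below (msupp (\<mu> t))" by (rule partB[OF that])
  qed
  have C: "\<exists>t0>0. bdd_below (msupp (\<mu> t0))" if "\<forall>t\<ge>0. bdd_below (msupp (\<mu> t))"
  proof -
    have "bdd_below (msupp (\<mu> 1))" using that by simp
    then show ?thesis by (intro exI[of _ 1]) simp
  qed
  show ?thesis
  proof (intro conjI iffI)
    assume h: "\<exists>t0>0. bdd_below (msupp (\<mu> t0))"
    show "\<forall>t\<ge>0. bdd_below (msupp (\<mu> t))" by (rule B[OF A[OF h]])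
  next
    assume h: "\<forall>t\<ge>0. bdd_below (msupp (\<mu> t))"
    show "\<exists>t0>0. bdd_below (msupp (\<mu> t0))" by (rule C[OF h])
  next
    assume h: "\<forall>t\<ge>0. bdd_below (msupp (\<mu> t))"
    show "bdd_below (msupp \<tau>)" by (rule A[OF C[OF h]])
  next
    assume h: "bdd_below (msupp \<tau>)"
    show "\<forall>t\<ge>0. bdd_below (msupp (\<mu> t))" by (rule B[OF h])
  qed
qed

end
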